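(* Let $n\ge 2d$. A symmetric form $f$ of degree $2d$ in $n$ variables is a sum of squares of forms in $T$ if and only if $f=\langle Q_1,A\rangle+\langle Q_2,B\rangle$ for some positive semidefinite real matrices $Q_1$ (of size $\pi(d)\times\pi(d)$) and $Q_2$ (of size $N\times N$, $N=\sum_{a=1}^d\pi(d-a)$).
   Context: $p_i=\frac1n(x_1^i+\dots+x_n^i)$, $p_\mu=\prod_i p_{\mu_i}$ for a partition $\mu$ (with $p_\emptyset=1$ for the empty partition of $0$). $\pi(k)$ = number of partitions of $k$. $H_{n,d}$ is the space of forms of degree $d$ in $n$ variables and $H^S_{n,k}$ the symmetric ones; $\mathcal{S}_n$ acts by permuting variables. $T\subseteq H_{n,d}$ is the $\mathcal{S}_n$-submodule generated by $H^S_{n,d}$ together with all forms $(x_1^a-x_2^a)g$ with $a\in\{1,\dots,d\}$ and $g\in H^S_{n,d-a}$. Let $\lambda_1,\dots,\lambda_{\pi(d)}$ be the partitions of $d$ and for $a\in\{1,\dots,d\}$ let $\mu^a_1,\dots,\mu^a_{\pi(d-a)}$ be the partitions of $d-a$. $A$ is the $\pi(d)\times\pi(d)$ matrix with $A_{i,j}=p_{\lambda_i}p_{\lambda_j}$. $B$ is the block matrix with blocks $B_{a,b}$ ($a,b\in\{1,\dots,d\}$) of size $\pi(d-a)\times\pi(d-b)$ with entries $(B_{a,b})_{i,j}=p_{\mu^a_i}p_{\mu^b_j}(p_{a+b}-p_ap_b)$. For symmetric matrices, $\langle X,Y\rangle=\operatorname{trace}(XY)$. *)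

theory Defs
  imports Complex_Main "HOL-Library.Multiset" "HOL-Combinatorics.Permutations"
begin

text \<open>Forms in n variables are represented as polynomial functions of
  x :: nat \<Rightarrow> real, using the variables x 0, ..., x (n-1).\<close>

definition exps :: "nat \<Rightarrow> nat \<Rightarrow> (nat \<Rightarrow> nat) set" where
  "exps n d = {\<alpha>. (\<forall>i. n \<le> i \<longrightarrow> \<alpha> i = 0) \<and> (\<Sum>i<n. \<alpha> i) = d}"

definition monom :: "nat \<Rightarrow> (nat \<Rightarrow> nat) \<Rightarrow> (nat \<Rightarrow> real) \<Rightarrow> real" where
  "monom n \<alpha> x = (\<Prod>i<n. x i ^ \<alpha> i)"

definition forms :: "nat \<Rightarrow> nat \<Rightarrow> ((nat \<Rightarrow> real) \<Rightarrow> real) set" where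
  "forms n d = {f. \<exists>c. f = (\<lambda>x. \<Sum>\<alpha>\<in>exps n d. c \<alpha> * monom n \<alpha> x)}"

definition perm_act :: "(nat \<Rightarrow> nat) \<Rightarrow> ((nat \<Rightarrow> real) \<Rightarrow> real) \<Rightarrow> ((nat \<Rightarrow> real) \<Rightarrow> real)" where
  "perm_act \<sigma> f = (\<lambda>x. f (\<lambda>i. x (\<sigma> i)))"

definition sym_forms :: "nat \<Rightarrow> nat \<Rightarrow> ((nat \<Rightarrow> real) \<Rightarrow> real) set" where
  "sym_forms n d = {f \<in> forms n d. \<forall>\<sigma>. \<sigma> permutes {..<n} \<longrightarrow> perm_act \<sigma> f = f}"

definition T_gens :: "nat \<Rightarrow> nat \<Rightarrow> ((nat \<Rightarrow> real) \<Rightarrow> real) set" where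
  "T_gens n d = sym_forms n d \<union>
     {(\<lambda>x. (x 0 ^ a - x 1 ^ a) * g x) | a g. a \<in> {1..d} \<and> g \<in> sym_forms n (d - a)}"

inductive_set Tmod :: "nat \<Rightarrow> nat \<Rightarrow> ((nat \<Rightarrow> real) \<Rightarrow> real) set" for n d where
  gen: "g \<in> T_gens n d \<Longrightarrow> g \<in> Tmod n d"
| zero: "(\<lambda>x. 0) \<in> Tmod n d"
| add: "f \<in> Tmod n d \<Longrightarrow> g \<in> Tmod n d \<Longrightarrow> (\<lambda>x. f x + g x) \<in> Tmod n d"
| smult: "f \<in> Tmod n d \<Longrightarrow> (\<lambda>x. c * f x) \<in> Tmod n d"
| perm: "f \<in> Tmod n d \<Longrightarrow> \<sigma> permutes {..<n} \<Longrightarrow> perm_act \<sigma> f \<in> Tmod n d"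

definition sos_of :: "((nat \<Rightarrow> real) \<Rightarrow> real) set \<Rightarrow> ((nat \<Rightarrow> real) \<Rightarrow> real) \<Rightarrow> bool" where
  "sos_of S f \<longleftrightarrow> (\<exists>hs. set hs \<subseteq> S \<and> f = (\<lambda>x. \<Sum>h\<leftarrow>hs. (h x)^2))"

definition psum :: "nat \<Rightarrow> nat \<Rightarrow> (nat \<Rightarrow> real) \<Rightarrow> real" where
  "psum n i x = (\<Sum>j<n. x j ^ i) / real n"

definition int_partitions :: "nat \<Rightarrow> nat multiset set" where
  "int_partitions k = {M. (\<forall>i\<in>#M. 0 < i) \<and> sum_mset M = k}"

definition pmu :: "nat \<Rightarrow> nat multiset \<Rightarrow> (nat \<Rightarrow> real) \<Rightarrow> real" where
  "pmu n M x = prod_mset (image_mset (\<lambda>i. psum n i x) M)"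

definition Amat :: "nat \<Rightarrow> nat multiset \<Rightarrow> nat multiset \<Rightarrow> (nat \<Rightarrow> real) \<Rightarrow> real" where
  "Amat n l m x = pmu n l x * pmu n m x"

definition Bidx :: "nat \<Rightarrow> (nat \<times> nat multiset) set" where
  "Bidx d = {(a, \<mu>). a \<in> {1..d} \<and> \<mu> \<in> int_partitions (d - a)}"

definition Bmat :: "nat \<Rightarrow> nat \<times> nat multiset \<Rightarrow> nat \<times> nat multiset \<Rightarrow> (nat \<Rightarrow> real) \<Rightarrow> real" where
  "Bmat n ia jb x = (case ia of (a, \<mu>) \<Rightarrow> case jb of (b, \<nu>) \<Rightarrow>
      pmu n \<mu> x * pmu n \<nu> x * (psum n (a + b) x - psum n a x * psum n b x))"

definition psd_on :: "'i set \<Rightarrow> ('i \<Rightarrow> 'i \<Rightarrow> real) \<Rightarrow> bool" where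
  "psd_on I Q \<longleftrightarrow> (\<forall>i\<in>I. \<forall>j\<in>I. Q i j = Q j i) \<and>
     (\<forall>v. 0 \<le> (\<Sum>i\<in>I. \<Sum>j\<in>I. v i * Q i j * v j))"

definition trace_inner :: "'i set \<Rightarrow> ('i \<Rightarrow> 'i \<Rightarrow> real) \<Rightarrow> ('i \<Rightarrow> 'i \<Rightarrow> real) \<Rightarrow> real" where
  "trace_inner I X Y = (\<Sum>i\<in>I. \<Sum>j\<in>I. X i j * Y j i)"

end

theory Submission imports Defs begin

lemma size_le_sum_mset_pos: "(\<forall>i\<in>#M. 0 < i) \<Longrightarrow> size M \<le> sum_mset (M::nat multiset)"
proof (induction M)
  case empty
  then show ?case by simp
next
  case (add x M)
  then show ?case by simp
qed

lemma mem_le_sum_mset: "i \<in># M \<Longrightarrow> i \<le> sum_mset (M::nat multiset)"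
proof -
  assume "i \<in># M"
  then obtain N where "M = add_mset i N" by (blast dest: multi_member_split)
  then show ?thesis by simp
qed

lemma finite_int_partitions: "finite (int_partitions k)"
proof -
  have "int_partitions k \<subseteq> (\<Union>s\<in>{..k}. multisets_of_size {1..k} s)"
  proof
    fix M assume M: "M \<in> int_partitions k"
    hence pos: "\<forall>i\<in>#M. 0 < i" and s: "sum_mset M = k" by (auto simp: int_partitions_def)
    have "size M \<le> k" using size_le_sum_mset_pos[OF pos] s by simp
    moreover have "set_mset M \<subseteq> {1..k}"
    proof
      fix i assume i: "i \<in># M"
      then have "i \<le> sum_mset M" by (rule mem_le_sum_mset) 
      with pos i s show "i \<in> {1..k}" by force
    qed
    ultimately show "M \<in> (\<Union>s\<in>{..k}. multisets_of_size {1..k} s)" by (auto simp: multisets_of_size_def)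
  qed
  moreover have "finite (\<Union>s\<in>{..k}. multisets_of_size {1..k} s)"
    by (intro finite_UN_I finite_atMost finite_multisets_of_size finite_atLeastAtMost)
  ultimately show ?thesis by (rule finite_subset)
qed

lemma finite_exps: "finite (exps n d)"
proof -
  have "exps n d \<subseteq> {f. \<forall>x. (x \<in> {..<n} \<longrightarrow> f x \<in> {..d}) \<and> (x \<notin> {..<n} \<longrightarrow> f x = 0)}"
  proof
    fix f assume f: "f \<in> exps n d"
    have "f x \<in> {..d}" if "x \<in> {..<n}" for x
    proof -
      have "f x \<le> (\<Sum>i<n. f i)" using that by (intro member_le_sum) simp_all
      then show ?thesis using f by (simp add: exps_def)
    qed
    moreover have "f x = 0" if "x \<notin> {..<n}" for x using f that by (simp add: exps_def)
    ultimately show "f \<in> {f. \<forall>x. (x \<in> {..<n} \<longrightarrow> f x \<in> {..d}) \<and> (x \<notin> {..<n} \<longrightarrow> f x = 0)}" by blast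
  qed
  moreover have "finite {f. \<forall>x. (x \<in> {..<n} \<longrightarrow> f x \<in> {..d}) \<and> (x \<notin> {..<n} \<longrightarrow> f x = (0::nat))}"
    by (rule finite_set_of_finite_funs) simp_all
  ultimately show ?thesis by (rule finite_subset)
qed

lemma group_gen:
  fixes c :: "'j \<Rightarrow> real"
  assumes "finite J" "finite T" "\<phi> ` J \<subseteq> T"
  shows "(\<Sum>j\<in>J. c j * F (\<phi> j)) = (\<Sum>t\<in>T. (\<Sum>j\<in>{j\<in>J. \<phi> j = t}. c j) * F t)"
proof -
  have "(\<Sum>j\<in>J. c j * F (\<phi> j)) = (\<Sum>t\<in>T. \<Sum>j\<in>{j\<in>J. \<phi> j = t}. c j * F (\<phi> j))"
    using sum.group[OF assms, of "\<lambda>j. c j * F (\<phi> j)"] by simp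
  also have "\<dots> = (\<Sum>t\<in>T. (\<Sum>j\<in>{j\<in>J. \<phi> j = t}. c j) * F t)"
    by (intro sum.cong refl) (simp add: sum_distrib_right)
  finally show ?thesis .
qed

lemma formsI: "f = (\<lambda>x. \<Sum>\<alpha>\<in>exps n k. c \<alpha> * monom n \<alpha> x) \<Longrightarrow> f \<in> forms n k"
  unfolding forms_def by blast

lemma forms_sum_gen:
  assumes "finite J" "\<And>j. j \<in> J \<Longrightarrow> \<phi> j \<in> exps n k"
  shows "(\<lambda>x. \<Sum>j\<in>J. c j * monom n (\<phi> j) x) \<in> forms n k"
proof -
  have "(\<lambda>x. \<Sum>j\<in>J. c j * monom n (\<phi> j) x) =
     (\<lambda>x. \<Sum>\<alpha>\<in>exps n k. (\<Sum>j\<in>{j\<in>J. \<phi> j = \<alpha>}. c j) * monom n \<alpha> x)"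
  proof
    fix x
    show "(\<Sum>j\<in>J. c j * monom n (\<phi> j) x) = (\<Sum>\<alpha>\<in>exps n k. (\<Sum>j\<in>{j\<in>J. \<phi> j = \<alpha>}. c j) * monom n \<alpha> x)"
      by (rule group_gen[of J "exps n k" \<phi> c "\<lambda>\<alpha>. monom n \<alpha> x"]) (use assms finite_exps in auto)
  qed
  then show ?thesis by (rule formsI)
qed

lemma forms_add:
  assumes "f \<in> forms n k" "g \<in> forms n k"
  shows "(\<lambda>x. f x + g x) \<in> forms n k"
proof -
  obtain c where c: "f = (\<lambda>x. \<Sum>\<alpha>\<in>exps n k. c \<alpha> * monom n \<alpha> x)" using assms(1) by (auto simp: forms_def)
  obtain c' where c': "g = (\<lambda>x. \<Sum>\<alpha>\<in>exps n k. c' \<alpha> * monom n \<alpha> x)" using assms(2) by (auto simp: forms_def)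
  have "(\<lambda>x. f x + g x) = (\<lambda>x. \<Sum>\<alpha>\<in>exps n k. (c \<alpha> + c' \<alpha>) * monom n \<alpha> x)"
    by (simp add: c c' sum.distrib distrib_right)
  then show ?thesis by (rule formsI)
qed

lemma forms_smult:
  assumes "f \<in> forms n k"
  shows "(\<lambda>x. a * f x) \<in> forms n k"
proof -
  obtain c where c: "f = (\<lambda>x. \<Sum>\<alpha>\<in>exps n k. c \<alpha> * monom n \<alpha> x)" using assms(1) by (auto simp: forms_def)
  have "(\<lambda>x. a * f x) = (\<lambda>x. \<Sum>\<alpha>\<in>exps n k. (a * c \<alpha>) * monom n \<alpha> x)"
    by (simp add: c sum_distrib_left mult.assoc)
  then show ?thesis by (rule formsI)
qed

lemma forms_zero: "(\<lambda>x. 0) \<in> forms n k"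
proof -
  have "(\<lambda>x. 0::real) = (\<lambda>x. \<Sum>\<alpha>\<in>exps n k. 0 * monom n \<alpha> x)" by simp
  then show ?thesis by (rule formsI)
qed

lemma forms_lincomb:
  assumes "finite J" "\<And>j. j \<in> J \<Longrightarrow> f j \<in> forms n k"
  shows "(\<lambda>x. \<Sum>j\<in>J. c j * f j x) \<in> forms n k"
  using assms
proof (induction J rule: finite_induct)
  case empty
  then show ?case using forms_zero by simp
next
  case (insert j J)
  have "(\<lambda>x. c j * f j x + (\<Sum>j\<in>J. c j * f j x)) \<in> forms n k"
    using insert by (intro forms_add forms_smult) auto
  then show ?case using insert by simp
qed

lemma monom_add: "monom n (\<lambda>i. \<alpha> i + \<beta> i) x = monom n \<alpha> x * monom n \<beta> x"
  by (simp add: monom_def power_add prod.distrib)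

lemma exps_add: "\<alpha> \<in> exps n a \<Longrightarrow> \<beta> \<in> exps n b \<Longrightarrow> (\<lambda>i. \<alpha> i + \<beta> i) \<in> exps n (a + b)"
  by (simp add: exps_def sum.distrib)

lemma forms_mult:
  assumes "f \<in> forms n a" "g \<in> forms n b"
  shows "(\<lambda>x. f x * g x) \<in> forms n (a + b)"
proof -
  obtain c where c: "f = (\<lambda>x. \<Sum>\<alpha>\<in>exps n a. c \<alpha> * monom n \<alpha> x)" using assms(1) by (auto simp: forms_def)
  obtain c' where c': "g = (\<lambda>x. \<Sum>\<alpha>\<in>exps n b. c' \<alpha> * monom n \<alpha> x)" using assms(2) by (auto simp: forms_def)
  have eq: "(\<lambda>x. f x * g x) = (\<lambda>x. \<Sum>p\<in>exps n a \<times> exps n b. (c (fst p) * c' (snd p)) * monom n (\<lambda>i. fst p i + snd p i) x)"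
  proof
    fix x
    have "f x * g x = (\<Sum>\<alpha>\<in>exps n a. \<Sum>\<beta>\<in>exps n b. (c \<alpha> * monom n \<alpha> x) * (c' \<beta> * monom n \<beta> x))"
      by (simp add: c c' sum_product)
    also have "\<dots> = (\<Sum>p\<in>exps n a \<times> exps n b. (c (fst p) * monom n (fst p) x) * (c' (snd p) * monom n (snd p) x))"
      by (simp add: sum.cartesian_product split_def)
    also have "\<dots> = (\<Sum>p\<in>exps n a \<times> exps n b. (c (fst p) * c' (snd p)) * monom n (\<lambda>i. fst p i + snd p i) x)"
      by (intro sum.cong refl) (simp add: monom_add)
    finally show "f x * g x = (\<Sum>p\<in>exps n a \<times> exps n b. (c (fst p) * c' (snd p)) * monom n (\<lambda>i. fst p i + snd p i) x)" .
  qed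
  show ?thesis unfolding eq
    by (rule forms_sum_gen) (auto simp: finite_exps intro: exps_add)
qed

lemma unit_exps: "j < n \<Longrightarrow> (\<lambda>k. if k = j then i else 0) \<in> exps n i"
  by (simp add: exps_def)

lemma monom_unit: "j < n \<Longrightarrow> monom n (\<lambda>k. if k = j then i else 0) x = x j ^ i"
proof -
  assume j: "j < n"
  have "monom n (\<lambda>k. if k = j then i else 0) x = (\<Prod>k<n. if k = j then x j ^ i else 1)"
    unfolding monom_def by (intro prod.cong refl) auto
  also have "\<dots> = x j ^ i" using j by simp
  finally show ?thesis .
qed

lemma psum_forms: "psum n i \<in> forms n i"
proof -
  have "psum n i = (\<lambda>x. \<Sum>j\<in>{..<n}. (1 / real n) * monom n (\<lambda>k. if k = j then i else 0) x)"
  proof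
    fix x
    show "psum n i x = (\<Sum>j\<in>{..<n}. (1 / real n) * monom n (\<lambda>k. if k = j then i else 0) x)"
      unfolding psum_def by (simp add: monom_unit sum_divide_distrib)
  qed
  also have "\<dots> \<in> forms n i" by (rule forms_sum_gen) (auto intro: unit_exps)
  finally show ?thesis .
qed

lemma one_forms: "(\<lambda>x. 1) \<in> forms n 0"
proof -
  have "(\<lambda>x. 1::real) = (\<lambda>x. \<Sum>j\<in>{0::nat}. 1 * monom n (\<lambda>k. 0) x)" by (simp add: monom_def)
  also have "\<dots> \<in> forms n 0" by (rule forms_sum_gen) (auto simp: exps_def)
  finally show ?thesis .
qed

lemma pmu_empty[simp]: "pmu n {#} x = 1" by (simp add: pmu_def)
lemma pmu_add_mset[simp]: "pmu n (add_mset i M) x = psum n i x * pmu n M x" by (simp add: pmu_def)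

lemma pmu_forms: "pmu n M \<in> forms n (sum_mset M)"
proof (induction M)
  case empty
  have "pmu n {#} = (\<lambda>x. 1)" by (rule ext) simp
  then show ?case using one_forms by simp
next
  case (add i M)
  have "(\<lambda>x. psum n i x * pmu n M x) \<in> forms n (i + sum_mset M)"
    by (intro forms_mult psum_forms add.IH)
  moreover have "pmu n (add_mset i M) = (\<lambda>x. psum n i x * pmu n M x)" by (rule ext) simp
  ultimately show ?case by simp
qed

lemma psum_perm:
  assumes "\<sigma> permutes {..<n}"
  shows "psum n i (\<lambda>k. x (\<sigma> k)) = psum n i x"
proof -
  have "(\<Sum>j<n. x j ^ i) = (\<Sum>j<n. x (\<sigma> j) ^ i)"
    using sum.permute[OF assms, of "\<lambda>j. x j ^ i"] by (simp add: o_def)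
  then show ?thesis by (simp add: psum_def)
qed

lemma pmu_perm:
  assumes "\<sigma> permutes {..<n}"
  shows "pmu n M (\<lambda>k. x (\<sigma> k)) = pmu n M x"
  unfolding pmu_def using psum_perm[OF assms] by simp

definition PS :: "nat \<Rightarrow> nat \<Rightarrow> ((nat \<Rightarrow> real) \<Rightarrow> real) \<Rightarrow> bool" where
  "PS n k g \<longleftrightarrow> (\<exists>c. g = (\<lambda>x. \<Sum>\<mu>\<in>int_partitions k. c \<mu> * pmu n \<mu> x))"

lemma PS_sym_forms:
  assumes "PS n k g"
  shows "g \<in> sym_forms n k"
proof -
  obtain c where c: "g = (\<lambda>x. \<Sum>\<mu>\<in>int_partitions k. c \<mu> * pmu n \<mu> x)" using assms by (auto simp: PS_def)
  have "g \<in> forms n k" unfolding c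
    by (rule forms_lincomb[OF finite_int_partitions]) (use pmu_forms in \<open>auto simp: int_partitions_def\<close>)
  moreover have "perm_act \<sigma> g = g" if "\<sigma> permutes {..<n}" for \<sigma>
    unfolding c perm_act_def using pmu_perm[OF that] by simp
  ultimately show ?thesis by (simp add: sym_forms_def)
qed


section \<open>Power sums span symmetric forms\<close>

lemma PSI: "g = (\<lambda>x. \<Sum>\<mu>\<in>int_partitions k. c \<mu> * pmu n \<mu> x) \<Longrightarrow> PS n k g"
  unfolding PS_def by blast

lemma PS_gen:
  assumes "finite J" "\<And>j. j \<in> J \<Longrightarrow> \<mu>s j \<in> int_partitions k"
  shows "PS n k (\<lambda>x. \<Sum>j\<in>J. c j * pmu n (\<mu>s j) x)"
proof -
  have "(\<lambda>x. \<Sum>j\<in>J. c j * pmu n (\<mu>s j) x) =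
     (\<lambda>x. \<Sum>\<mu>\<in>int_partitions k. (\<Sum>j\<in>{j\<in>J. \<mu>s j = \<mu>}. c j) * pmu n \<mu> x)"
  proof
    fix x
    show "(\<Sum>j\<in>J. c j * pmu n (\<mu>s j) x) = (\<Sum>\<mu>\<in>int_partitions k. (\<Sum>j\<in>{j\<in>J. \<mu>s j = \<mu>}. c j) * pmu n \<mu> x)"
      by (rule group_gen[of J "int_partitions k" \<mu>s c "\<lambda>\<mu>. pmu n \<mu> x"]) (use assms finite_int_partitions in auto)
  qed
  then show ?thesis by (rule PSI)
qed

lemma PS_zero: "PS n k (\<lambda>x. 0)"
  by (rule PSI[where c="\<lambda>_. 0"]) simp

lemma PS_add:
  assumes "PS n k f" "PS n k g"
  shows "PS n k (\<lambda>x. f x + g x)"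
proof -
  obtain c where c: "f = (\<lambda>x. \<Sum>\<mu>\<in>int_partitions k. c \<mu> * pmu n \<mu> x)" using assms(1) by (auto simp: PS_def)
  obtain c' where c': "g = (\<lambda>x. \<Sum>\<mu>\<in>int_partitions k. c' \<mu> * pmu n \<mu> x)" using assms(2) by (auto simp: PS_def)
  have "(\<lambda>x. f x + g x) = (\<lambda>x. \<Sum>\<mu>\<in>int_partitions k. (c \<mu> + c' \<mu>) * pmu n \<mu> x)"
    by (simp add: c c' sum.distrib distrib_right)
  then show ?thesis by (rule PSI)
qed

lemma PS_smult:
  assumes "PS n k f"
  shows "PS n k (\<lambda>x. a * f x)"
proof -
  obtain c where c: "f = (\<lambda>x. \<Sum>\<mu>\<in>int_partitions k. c \<mu> * pmu n \<mu> x)" using assms(1) by (auto simp: PS_def)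
  have "(\<lambda>x. a * f x) = (\<lambda>x. \<Sum>\<mu>\<in>int_partitions k. (a * c \<mu>) * pmu n \<mu> x)"
    by (simp add: c sum_distrib_left mult.assoc)
  then show ?thesis by (rule PSI)
qed

lemma PS_diff:
  assumes "PS n k f" "PS n k g"
  shows "PS n k (\<lambda>x. f x - g x)"
proof -
  have "PS n k (\<lambda>x. f x + (-1) * g x)" by (intro PS_add PS_smult assms)
  then show ?thesis by simp
qed

lemma PS_sum:
  assumes "finite J" "\<And>j. j \<in> J \<Longrightarrow> PS n k (f j)"
  shows "PS n k (\<lambda>x. \<Sum>j\<in>J. f j x)"
  using assms
proof (induction J rule: finite_induct)
  case empty
  then show ?case using PS_zero by simp
next
  case (insert j J)
  have "PS n k (\<lambda>x. f j x + (\<Sum>j\<in>J. f j x))"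
    using insert by (intro PS_add) auto
  then show ?case using insert by simp
qed

lemma PS_cong:
  assumes "PS n k f" "\<And>x. f x = g x" "k = k'"
  shows "PS n k' g"
proof -
  have "f = g" by (rule ext) (rule assms(2))
  then show ?thesis using assms(1,3) by simp
qed

definition Ssum :: "nat \<Rightarrow> nat \<Rightarrow> (nat \<Rightarrow> real) \<Rightarrow> real" where
  "Ssum n a x = (\<Sum>i<n. x i ^ a)"

lemma PS_mult_S:
  assumes "PS n k g"
  shows "PS n (a + k) (\<lambda>x. Ssum n a x * g x)"
proof (cases "n = 0")
  case True
  then show ?thesis using PS_zero by (simp add: Ssum_def)
next
  case n: False
  obtain c where c: "g = (\<lambda>x. \<Sum>\<mu>\<in>int_partitions k. c \<mu> * pmu n \<mu> x)" using assms(1) by (auto simp: PS_def)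
  show ?thesis
  proof (cases "a = 0")
    case True
    have "PS n k (\<lambda>x. real n * g x)" by (rule PS_smult[OF assms])
    then show ?thesis using True by (simp add: Ssum_def)
  next
    case a: False
    have "PS n (a + k) (\<lambda>x. \<Sum>\<mu>\<in>int_partitions k. (real n * c \<mu>) * pmu n (add_mset a \<mu>) x)"
      by (rule PS_gen[OF finite_int_partitions]) (use a in \<open>auto simp: int_partitions_def\<close>)
    moreover have "(\<Sum>\<mu>\<in>int_partitions k. (real n * c \<mu>) * pmu n (add_mset a \<mu>) x) = Ssum n a x * g x" for x
    proof -
      have S: "Ssum n a x = real n * psum n a x" using n by (simp add: Ssum_def psum_def)
      show ?thesis unfolding S c by (simp add: sum_distrib_left mult_ac)
    qed
    ultimately show ?thesis by (rule PS_cong) simp_all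
  qed
qed

lemma PS_pmu: "\<mu> \<in> int_partitions k \<Longrightarrow> PS n k (pmu n \<mu>)"
proof -
  assume \<mu>: "\<mu> \<in> int_partitions k"
  have "PS n k (\<lambda>x. \<Sum>j\<in>{0::nat}. 1 * pmu n ((\<lambda>_. \<mu>) j) x)"
    by (rule PS_gen) (use \<mu> in auto)
  then show ?thesis by (rule PS_cong) simp_all
qed

definition dl :: "nat \<Rightarrow> nat \<Rightarrow> nat list set" where
  "dl n l = {js. distinct js \<and> length js = l \<and> set js \<subseteq> {..<n}}"

lemma finite_dl: "finite (dl n l)"
proof -
  have "dl n l \<subseteq> {xs. set xs \<subseteq> {..<n} \<and> length xs = l}" by (auto simp: dl_def)
  moreover have "finite {xs. set xs \<subseteq> {..<n} \<and> length xs = l}" by (rule finite_lists_length_eq) simp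
  ultimately show ?thesis by (rule finite_subset)
qed

lemma dl_0: "dl n 0 = {[]}" by (auto simp: dl_def)

lemma sum_dl_Suc:
  "(\<Sum>js\<in>dl n (Suc l). F js) = (\<Sum>js\<in>dl n l. \<Sum>i\<in>{..<n} - set js. F (i # js))"
proof -
  let ?h = "\<lambda>p. snd p # fst p"
  let ?A = "SIGMA js:dl n l. {..<n} - set js"
  have inj: "inj_on ?h ?A" by (auto simp: inj_on_def)
  have img: "?h ` ?A = dl n (Suc l)"
  proof
    show "?h ` ?A \<subseteq> dl n (Suc l)" by (auto simp: dl_def)
    show "dl n (Suc l) \<subseteq> ?h ` ?A"
    proof
      fix ks assume ks: "ks \<in> dl n (Suc l)"
      then obtain i js where ij: "ks = i # js" by (cases ks) (auto simp: dl_def)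
      then have "(js, i) \<in> ?A" using ks by (auto simp: dl_def)
      then show "ks \<in> ?h ` ?A" using ij by force
    qed
  qed
  have "(\<Sum>js\<in>dl n (Suc l). F js) = (\<Sum>p\<in>?A. F (?h p))"
    using sum.reindex[OF inj, of F] img by simp
  also have "\<dots> = (\<Sum>js\<in>dl n l. \<Sum>i\<in>{..<n} - set js. F (i # js))"
    by (subst sum.Sigma) (auto simp: finite_dl split_def)
  finally show ?thesis .
qed

definition Mi :: "nat \<Rightarrow> nat list \<Rightarrow> (nat \<Rightarrow> real) \<Rightarrow> real" where
  "Mi n e x = (\<Sum>js\<in>dl n (length e). \<Prod>t<length e. x (js ! t) ^ (e ! t))"

lemma sum_set_distinct_nth:
  "distinct js \<Longrightarrow> (\<Sum>i\<in>set js. g i) = (\<Sum>t<length js. g (js ! t))"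
proof -
  assume d: "distinct js"
  have "(\<Sum>i\<in>set js. g i) = sum_list (map g js)" using d by (rule sum.distinct_set_conv_list)
  also have "\<dots> = (\<Sum>t<length js. g (js ! t))"
    by (simp add: sum_list_sum_nth atLeast0LessThan)
  finally show ?thesis .
qed

lemma prod_update:
  assumes "t < length e"
  shows "(\<Prod>s<length e. x (js ! s) ^ (e[t := e ! t + a] ! s)) = x (js ! t) ^ a * (\<Prod>s<length e. x (js ! s) ^ (e ! s))"
proof -
  have "(\<Prod>s<length e. x (js ! s) ^ (e[t := e ! t + a] ! s)) =
        (\<Prod>s<length e. (if s = t then x (js ! t) ^ a else 1) * x (js ! s) ^ (e ! s))"
    using assms by (intro prod.cong refl) (auto simp: nth_list_update power_add mult.commute)
  also have "\<dots> = (\<Prod>s<length e. (if s = t then x (js ! t) ^ a else 1)) * (\<Prod>s<length e. x (js ! s) ^ (e ! s))"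
    by (rule prod.distrib)
  also have "(\<Prod>s<length e. (if s = t then x (js ! t) ^ a else 1)) = x (js ! t) ^ a"
    using assms by simp
  finally show ?thesis .
qed

lemma Mi_Cons:
  "Mi n (a # e) x = Ssum n a x * Mi n e x - (\<Sum>t<length e. Mi n (e[t := e ! t + a]) x)"
proof -
  let ?P = "\<lambda>js. \<Prod>t<length e. x (js ! t) ^ (e ! t)"
  have "Mi n (a # e) x = (\<Sum>js\<in>dl n (length e). \<Sum>i\<in>{..<n} - set js. x i ^ a * ?P js)"
    unfolding Mi_def length_Cons sum_dl_Suc prod.lessThan_Suc_shift by simp
  also have "\<dots> = (\<Sum>js\<in>dl n (length e). (Ssum n a x - (\<Sum>t<length e. x (js ! t) ^ a)) * ?P js)"
  proof (intro sum.cong refl)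
    fix js assume js: "js \<in> dl n (length e)"
    have "(\<Sum>i\<in>{..<n} - set js. x i ^ a) = (\<Sum>i<n. x i ^ a) - (\<Sum>i\<in>set js. x i ^ a)"
      using js by (intro sum_diff) (auto simp: dl_def)
    also have "(\<Sum>i\<in>set js. x i ^ a) = (\<Sum>t<length e. x (js ! t) ^ a)"
      using js sum_set_distinct_nth[of js "\<lambda>i. x i ^ a"] by (simp add: dl_def)
    finally have eq: "(\<Sum>i\<in>{..<n} - set js. x i ^ a) = Ssum n a x - (\<Sum>t<length e. x (js ! t) ^ a)"
      by (simp add: Ssum_def)
    have "(\<Sum>i\<in>{..<n} - set js. x i ^ a * ?P js) = (\<Sum>i\<in>{..<n} - set js. x i ^ a) * ?P js"
      by (simp add: sum_distrib_right)
    then show "(\<Sum>i\<in>{..<n} - set js. x i ^ a * ?P js) = (Ssum n a x - (\<Sum>t<length e. x (js ! t) ^ a)) * ?P js"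
      by (simp only: eq)
  qed
  also have "\<dots> = Ssum n a x * Mi n e x - (\<Sum>js\<in>dl n (length e). \<Sum>t<length e. x (js ! t) ^ a * ?P js)"
    by (simp add: Mi_def left_diff_distrib sum_subtractf sum_distrib_left sum_distrib_right)
  also have "(\<Sum>js\<in>dl n (length e). \<Sum>t<length e. x (js ! t) ^ a * ?P js) = (\<Sum>t<length e. Mi n (e[t := e ! t + a]) x)"
    unfolding Mi_def by (subst sum.swap) (auto intro!: sum.cong simp: prod_update)
  finally show ?thesis .
qed

lemma sum_list_update_add: "t < length e \<Longrightarrow> sum_list (e[t := e ! t + a]) = sum_list e + (a::nat)"
  by (induction e arbitrary: t) (auto simp: nth_Cons split: nat.splits)

lemma Mi_PS: "PS n (sum_list e) (Mi n e)"
proof (induction "length e" arbitrary: e)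
  case 0
  then have e: "e = []" by simp
  have "PS n 0 (pmu n {#})" by (rule PS_pmu) (simp add: int_partitions_def)
  then show ?case by (rule PS_cong) (simp_all add: e Mi_def dl_0)
next
  case (Suc l)
  then obtain a e' where e: "e = a # e'" and l: "length e' = l" by (cases e) auto
  have "PS n (a + sum_list e') (\<lambda>x. Ssum n a x * Mi n e' x)"
    by (rule PS_mult_S) (use Suc.hyps(1)[of e'] l in simp)
  moreover have "PS n (a + sum_list e') (\<lambda>x. \<Sum>t<length e'. Mi n (e'[t := e' ! t + a]) x)"
  proof (rule PS_sum)
    fix t assume "t \<in> {..<length e'}"
    then have t: "t < length e'" by simp
    have "PS n (sum_list (e'[t := e' ! t + a])) (Mi n (e'[t := e' ! t + a]))"
      by (rule Suc.hyps(1)) (simp add: l)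
    then show "PS n (a + sum_list e') (Mi n (e'[t := e' ! t + a]))"
      using sum_list_update_add[OF t, of a] by (simp add: add.commute)
  qed simp
  ultimately have "PS n (a + sum_list e') (\<lambda>x. Ssum n a x * Mi n e' x - (\<Sum>t<length e'. Mi n (e'[t := e' ! t + a]) x))"
    by (rule PS_diff)
  then show ?case by (rule PS_cong) (simp_all add: e Mi_Cons)
qed

lemma perm_dl:
  "(\<Sum>\<sigma>\<in>{\<sigma>. \<sigma> permutes {..<n}}. \<Prod>i<n. G i (\<sigma> i)) = (\<Sum>js\<in>dl n n. \<Prod>t<n. G t (js ! t))"
proof -
  let ?h = "\<lambda>\<sigma>. map \<sigma> [0..<n]"
  let ?P = "{\<sigma>. \<sigma> permutes {..<n}}"
  have inj: "inj_on ?h ?P"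
  proof (rule inj_onI)
    fix \<sigma> \<tau> assume s: "\<sigma> \<in> ?P" and t: "\<tau> \<in> ?P" and eq: "?h \<sigma> = ?h \<tau>"
    show "\<sigma> = \<tau>"
    proof
      fix i
      show "\<sigma> i = \<tau> i"
      proof (cases "i < n")
        case True
        then show ?thesis using eq by simp
      next
        case False
        then show ?thesis using s t by (simp add: permutes_not_in)
      qed
    qed
  qed
  have img: "?h ` ?P = dl n n"
  proof
    show "?h ` ?P \<subseteq> dl n n"
    proof
      fix js assume "js \<in> ?h ` ?P"
      then obtain \<sigma> where s: "\<sigma> permutes {..<n}" and js: "js = ?h \<sigma>" by auto
      have "inj_on \<sigma> {..<n}" using s by (rule permutes_inj_on)
      then have "distinct js" unfolding js by (simp add: distinct_map atLeast0LessThan)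
      moreover have "set js \<subseteq> {..<n}"
      proof -
        have "\<sigma> i < n" if "i < n" for i using permutes_in_image[OF s, of i] that by simp
        then show ?thesis unfolding js by auto
      qed
      ultimately show "js \<in> dl n n" by (simp add: dl_def js)
    qed
    show "dl n n \<subseteq> ?h ` ?P"
    proof
      fix js assume js: "js \<in> dl n n"
      then have d: "distinct js" and len: "length js = n" and sub: "set js \<subseteq> {..<n}" by (auto simp: dl_def)
      have setjs: "set js = {..<n}"
        using card_subset_eq[OF finite_lessThan sub] d len by (simp add: distinct_card)
      define \<sigma> where "\<sigma> = (\<lambda>i. if i < n then js ! i else i)"
      have "bij_betw \<sigma> {..<n} {..<n}"
      proof (rule bij_betw_imageI)
        show "inj_on \<sigma> {..<n}" using d len by (auto simp: inj_on_def \<sigma>_def nth_eq_iff_index_eq)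
        have "\<sigma> ` {..<n} = set js" using len by (auto simp: \<sigma>_def set_conv_nth image_def)
        then show "\<sigma> ` {..<n} = {..<n}" using setjs by simp
      qed
      then have "\<sigma> permutes {..<n}" by (rule bij_imp_permutes) (simp add: \<sigma>_def)
      moreover have "?h \<sigma> = js" using len by (intro nth_equalityI) (auto simp: \<sigma>_def)
      ultimately show "js \<in> ?h ` ?P" by force
    qed
  qed
  have "(\<Sum>js\<in>dl n n. \<Prod>t<n. G t (js ! t)) = (\<Sum>\<sigma>\<in>?P. \<Prod>t<n. G t (?h \<sigma> ! t))"
    using sum.reindex[OF inj, of "\<lambda>js. \<Prod>t<n. G t (js ! t)"] img by simp
  also have "\<dots> = (\<Sum>\<sigma>\<in>?P. \<Prod>i<n. G i (\<sigma> i))"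
    by (intro sum.cong prod.cong refl) simp
  finally show ?thesis by simp
qed

lemma finite_perms: "finite {\<sigma>. \<sigma> permutes {..<(n::nat)}}"
  by (rule finite_permutations) simp

lemma card_perms: "card {\<sigma>. \<sigma> permutes {..<(n::nat)}} = fact n"
  by (rule card_permutations) simp_all

lemma sym_forms_PS:
  assumes "f \<in> sym_forms n k"
  shows "PS n k f"
proof -
  from assms obtain c where c: "f = (\<lambda>x. \<Sum>\<alpha>\<in>exps n k. c \<alpha> * monom n \<alpha> x)"
    and sym: "\<And>\<sigma>. \<sigma> permutes {..<n} \<Longrightarrow> perm_act \<sigma> f = f"
    by (auto simp: sym_forms_def forms_def)
  let ?P = "{\<sigma>. \<sigma> permutes {..<n}}"
  have key: "f x = (\<Sum>\<alpha>\<in>exps n k. (c \<alpha> / fact n) * Mi n (map \<alpha> [0..<n]) x)" for x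
  proof -
    have "(\<Sum>\<sigma>\<in>?P. f (\<lambda>i. x (\<sigma> i))) = (\<Sum>\<sigma>\<in>?P. f x)"
    proof (intro sum.cong refl)
      fix \<sigma> assume "\<sigma> \<in> ?P"
      then have "perm_act \<sigma> f = f" using sym by simp
      then show "f (\<lambda>i. x (\<sigma> i)) = f x" unfolding perm_act_def by (metis)
    qed
    also have "\<dots> = fact n * f x" by (simp add: card_perms)
    finally have fx: "f x = (\<Sum>\<sigma>\<in>?P. f (\<lambda>i. x (\<sigma> i))) / fact n" by simp
    have "(\<Sum>\<sigma>\<in>?P. f (\<lambda>i. x (\<sigma> i))) = (\<Sum>\<alpha>\<in>exps n k. c \<alpha> * (\<Sum>\<sigma>\<in>?P. \<Prod>i<n. x (\<sigma> i) ^ \<alpha> i))"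
      unfolding c monom_def by (simp add: sum.swap[of _ ?P] sum_distrib_left)
    also have "\<dots> = (\<Sum>\<alpha>\<in>exps n k. c \<alpha> * Mi n (map \<alpha> [0..<n]) x)"
    proof (intro sum.cong refl)
      fix \<alpha>
      have "(\<Sum>\<sigma>\<in>?P. \<Prod>i<n. x (\<sigma> i) ^ \<alpha> i) = (\<Sum>js\<in>dl n n. \<Prod>t<n. x (js ! t) ^ \<alpha> t)"
        by (rule perm_dl[of "\<lambda>i j. x j ^ \<alpha> i"])
      also have "\<dots> = Mi n (map \<alpha> [0..<n]) x" unfolding Mi_def by simp
      finally show "c \<alpha> * (\<Sum>\<sigma>\<in>?P. \<Prod>i<n. x (\<sigma> i) ^ \<alpha> i) = c \<alpha> * Mi n (map \<alpha> [0..<n]) x" by simp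
    qed
    finally show ?thesis using fx by (simp add: sum_divide_distrib)
  qed
  have "PS n k (\<lambda>x. \<Sum>\<alpha>\<in>exps n k. (c \<alpha> / fact n) * Mi n (map \<alpha> [0..<n]) x)"
  proof (rule PS_sum[OF finite_exps])
    fix \<alpha> assume a: "\<alpha> \<in> exps n k"
    have "sum_list (map \<alpha> [0..<n]) = k"
      using a by (simp add: exps_def sum_list_sum_nth atLeast0LessThan)
    then have "PS n k (Mi n (map \<alpha> [0..<n]))" using Mi_PS[of n "map \<alpha> [0..<n]"] by simp
    then show "PS n k (\<lambda>x. (c \<alpha> / fact n) * Mi n (map \<alpha> [0..<n]) x)" by (rule PS_smult)
  qed
  then show ?thesis by (rule PS_cong) (simp_all add: key)
qed


section \<open>Representation of elements of T\<close>

definition hrep :: "nat \<Rightarrow> nat \<Rightarrow> (nat multiset \<Rightarrow> real) \<Rightarrow> (nat \<Rightarrow> nat \<Rightarrow> nat multiset \<Rightarrow> real) \<Rightarrow> (nat \<Rightarrow> real) \<Rightarrow> real" where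
  "hrep n d c g x = (\<Sum>l\<in>int_partitions d. c l * pmu n l x) +
     (\<Sum>a\<in>{1..d}. \<Sum>i<n. x i ^ a * (\<Sum>\<mu>\<in>int_partitions (d - a). g a i \<mu> * pmu n \<mu> x))"

definition TR :: "nat \<Rightarrow> nat \<Rightarrow> ((nat \<Rightarrow> real) \<Rightarrow> real) \<Rightarrow> bool" where
  "TR n d h \<longleftrightarrow> (\<exists>c g. (\<forall>a \<mu>. (\<Sum>i<n. g a i \<mu>) = 0) \<and> h = hrep n d c g)"

lemma TRI: "(\<And>a \<mu>. (\<Sum>i<n. g a i \<mu>) = 0) \<Longrightarrow> (\<And>x. h x = hrep n d c g x) \<Longrightarrow> TR n d h"
  unfolding TR_def by (intro exI[of _ c] exI[of _ g]) auto

lemma hrep_add: "hrep n d c g x + hrep n d c' g' x = hrep n d (\<lambda>l. c l + c' l) (\<lambda>a i \<mu>. g a i \<mu> + g' a i \<mu>) x"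
  by (simp add: hrep_def sum.distrib distrib_right distrib_left add_ac)

lemma hrep_smult: "r * hrep n d c g x = hrep n d (\<lambda>l. r * c l) (\<lambda>a i \<mu>. r * g a i \<mu>) x"
  by (simp add: hrep_def sum_distrib_left distrib_left mult_ac)

lemma hrep_zero: "hrep n d (\<lambda>l. 0) (\<lambda>a i \<mu>. 0) x = 0"
  by (simp add: hrep_def)

lemma hrep_perm:
  assumes s: "\<sigma> permutes {..<n}"
  shows "hrep n d c g (\<lambda>k. x (\<sigma> k)) = hrep n d c (\<lambda>a j \<mu>. g a (inv \<sigma> j) \<mu>) x"
proof -
  have "(\<Sum>i<n. x (\<sigma> i) ^ a * (\<Sum>\<mu>\<in>int_partitions (d - a). g a i \<mu> * pmu n \<mu> x)) =
        (\<Sum>j<n. x j ^ a * (\<Sum>\<mu>\<in>int_partitions (d - a). g a (inv \<sigma> j) \<mu> * pmu n \<mu> x))" for a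
    using sum.permute[OF s, of "\<lambda>j. x j ^ a * (\<Sum>\<mu>\<in>int_partitions (d - a). g a (inv \<sigma> j) \<mu> * pmu n \<mu> x)"]
    by (simp add: o_def permutes_inverses[OF s])
  then show ?thesis by (simp add: hrep_def pmu_perm[OF s])
qed

lemma two_point_sum:
  assumes "2 \<le> n"
  shows "(\<Sum>i<n. if i = 0 then A else if i = Suc 0 then B else 0) = (A + B :: real)"
proof -
  have "{..<n} = {0, Suc 0} \<union> {2..<n}" using assms by auto
  moreover have "(\<Sum>i\<in>{2..<n}. if i = 0 then A else if i = Suc 0 then B else 0) = 0"
    by (intro sum.neutral) auto
  ultimately have "(\<Sum>i<n. if i = 0 then A else if i = Suc 0 then B else 0) =
     (\<Sum>i\<in>{0, Suc 0}. if i = 0 then A else if i = Suc 0 then B else 0) + 0"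
    by (metis (no_types, lifting) sum.union_disjoint finite.emptyI finite.insertI finite_atLeastLessThan
        Int_emptyI atLeastLessThan_iff insertE less_2_cases_iff not_less empty_iff)
  then show ?thesis by simp
qed

lemma TR_sym:
  assumes "s \<in> sym_forms n d"
  shows "TR n d s"
proof -
  obtain c where c: "s = (\<lambda>x. \<Sum>\<mu>\<in>int_partitions d. c \<mu> * pmu n \<mu> x)"
    using sym_forms_PS[OF assms] by (auto simp: PS_def)
  show ?thesis by (rule TRI[where c=c and g="\<lambda>a i \<mu>. 0"]) (simp_all add: c hrep_def)
qed

lemma TR_gen2:
  assumes n: "2 \<le> n" and a: "a \<in> {1..d}" and gg: "gg \<in> sym_forms n (d - a)"
  shows "TR n d (\<lambda>x. (x 0 ^ a - x 1 ^ a) * gg x)"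
proof -
  obtain cg where cg: "gg = (\<lambda>x. \<Sum>\<mu>\<in>int_partitions (d - a). cg \<mu> * pmu n \<mu> x)"
    using sym_forms_PS[OF gg] by (auto simp: PS_def)
  define g where "g = (\<lambda>b i \<mu>. if b = a then (if i = 0 then cg \<mu> else if i = Suc 0 then - cg \<mu> else 0) else (0::real))"
  show ?thesis
  proof (rule TRI[where c="\<lambda>l. 0" and g=g])
    fix b \<mu>
    show "(\<Sum>i<n. g b i \<mu>) = 0"
    proof (cases "b = a")
      case True
      then show ?thesis using two_point_sum[OF n, of "cg \<mu>" "- cg \<mu>"] by (simp add: g_def)
    next
      case False
      then show ?thesis by (simp add: g_def)
    qed
  next
    fix x
    have inner: "x i ^ b * (\<Sum>\<mu>\<in>int_partitions (d - b). g b i \<mu> * pmu n \<mu> x) =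
       (if b = a then (if i = 0 then x 0 ^ a * gg x else if i = Suc 0 then - (x 1 ^ a * gg x) else 0) else 0)" for b i
      by (simp add: g_def cg sum_negf sum_distrib_left)
    have "hrep n d (\<lambda>l. 0) g x = (\<Sum>b\<in>{1..d}. \<Sum>i<n. (if b = a then (if i = 0 then x 0 ^ a * gg x else if i = Suc 0 then - (x 1 ^ a * gg x) else 0) else 0))"
      unfolding hrep_def inner by simp
    also have "\<dots> = (\<Sum>b\<in>{1..d}. if b = a then (\<Sum>i<n. (if i = 0 then x 0 ^ a * gg x else if i = Suc 0 then - (x 1 ^ a * gg x) else 0)) else 0)"
      by (intro sum.cong refl) simp
    also have "\<dots> = (\<Sum>i<n. (if i = 0 then x 0 ^ a * gg x else if i = Suc 0 then - (x 1 ^ a * gg x) else 0))"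
      using a by simp
    also have "\<dots> = (x 0 ^ a - x 1 ^ a) * gg x"
      using two_point_sum[OF n] by (simp add: algebra_simps)
    finally show "(x 0 ^ a - x 1 ^ a) * gg x = hrep n d (\<lambda>l. 0) g x" by simp
  qed
qed

lemma Tmod_TR:
  assumes "h \<in> Tmod n d" and nd: "d = 0 \<or> 2 \<le> n"
  shows "TR n d h"
  using assms(1)
proof (induction rule: Tmod.induct)
  case (gen g)
  then show ?case
  proof (cases "g \<in> sym_forms n d")
    case True
    then show ?thesis by (rule TR_sym)
  next
    case False
    with gen obtain a gg where a: "a \<in> {1..d}" and gg: "gg \<in> sym_forms n (d - a)"
      and g: "g = (\<lambda>x. (x 0 ^ a - x 1 ^ a) * gg x)"
      by (auto simp: T_gens_def)
    have "2 \<le> n" using nd a by auto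
    then show ?thesis unfolding g by (rule TR_gen2[OF _ a gg])
  qed
next
  case zero
  show ?case by (rule TRI[where c="\<lambda>l. 0" and g="\<lambda>a i \<mu>. 0"]) (simp_all add: hrep_zero)
next
  case (add f g)
  obtain c1 g1 where 1: "\<And>a \<mu>. (\<Sum>i<n. g1 a i \<mu>) = 0" "f = hrep n d c1 g1" using add.IH(1) by (auto simp: TR_def)
  obtain c2 g2 where 2: "\<And>a \<mu>. (\<Sum>i<n. g2 a i \<mu>) = 0" "g = hrep n d c2 g2" using add.IH(2) by (auto simp: TR_def)
  show ?case
    by (rule TRI[where c="\<lambda>l. c1 l + c2 l" and g="\<lambda>a i \<mu>. g1 a i \<mu> + g2 a i \<mu>"])
       (simp_all add: sum.distrib 1 2 hrep_add)
next
  case (smult f r)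
  obtain c1 g1 where 1: "\<And>a \<mu>. (\<Sum>i<n. g1 a i \<mu>) = 0" "f = hrep n d c1 g1" using smult.IH by (auto simp: TR_def)
  show ?case
    by (rule TRI[where c="\<lambda>l. r * c1 l" and g="\<lambda>a i \<mu>. r * g1 a i \<mu>"])
       (simp_all add: 1 hrep_smult flip: sum_distrib_left)
next
  case (perm f \<sigma>)
  obtain c1 g1 where 1: "\<And>a \<mu>. (\<Sum>i<n. g1 a i \<mu>) = 0" "f = hrep n d c1 g1" using perm.IH by (auto simp: TR_def)
  show ?case
  proof (rule TRI[where c="c1" and g="\<lambda>a j \<mu>. g1 a (inv \<sigma> j) \<mu>"])
    fix a \<mu>
    show "(\<Sum>j<n. g1 a (inv \<sigma> j) \<mu>) = 0"
      using sum.permute[OF permutes_inv[OF perm.hyps(2)], of "\<lambda>i. g1 a i \<mu>"] 1(1)[of a \<mu>] by (simp add: o_def)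
  next
    fix x
    show "perm_act \<sigma> f x = hrep n d c1 (\<lambda>a j \<mu>. g1 a (inv \<sigma> j) \<mu>) x"
      unfolding perm_act_def 1(2) by (rule hrep_perm[OF perm.hyps(2)])
  qed
qed


section \<open>Averaging over permutations\<close>

lemma exists_perm1:
  fixes i n :: nat
  assumes "i < n"
  shows "\<exists>\<tau>. \<tau> permutes {..<n} \<and> \<tau> 0 = i"
proof -
  have "Transposition.transpose 0 i permutes {..<n}" using assms by (intro permutes_swap_id) auto
  then show ?thesis by (intro exI[of _ "Transposition.transpose 0 i"]) simp
qed

lemma exists_perm2:
  assumes "i < n" "j < n" "i \<noteq> j"
  shows "\<exists>\<tau>. \<tau> permutes {..<n} \<and> \<tau> 0 = i \<and> \<tau> (Suc 0) = j"
proof -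
  have n: "Suc 0 < n" using assms by auto
  define \<rho> where "\<rho> = Transposition.transpose 0 i"
  have \<rho>: "\<rho> permutes {..<n}" unfolding \<rho>_def using assms by (intro permutes_swap_id) auto
  define j' where "j' = \<rho> j"
  have j'n: "j' < n" using permutes_in_image[OF \<rho>, of j] assms(2) by (simp add: j'_def)
  have j'0: "j' \<noteq> 0" using assms(3) by (auto simp: j'_def \<rho>_def transpose_def)
  define \<kappa> where "\<kappa> = Transposition.transpose (Suc 0) j'"
  have \<kappa>: "\<kappa> permutes {..<n}" unfolding \<kappa>_def using n j'n by (intro permutes_swap_id) auto
  have k0: "\<kappa> 0 = 0" using j'0 by (simp add: \<kappa>_def transpose_def)
  have k1: "\<kappa> (Suc 0) = j'" by (simp add: \<kappa>_def)
  have "\<rho> j' = j" by (simp add: j'_def \<rho>_def)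
  then have "(\<rho> \<circ> \<kappa>) permutes {..<n} \<and> (\<rho> \<circ> \<kappa>) 0 = i \<and> (\<rho> \<circ> \<kappa>) (Suc 0) = j"
    using permutes_compose[OF \<kappa> \<rho>] k0 k1 by (simp add: \<rho>_def)
  then show ?thesis by blast
qed

lemma sum_perm_pow:
  assumes "\<sigma> permutes {..<n}"
  shows "(\<Sum>i<n. x (\<sigma> i) ^ a) = (\<Sum>k<n. x k ^ (a::nat) :: real)"
  using sum.permute[OF assms, of "\<lambda>k. x k ^ a"] by (simp add: o_def)

lemma sum_perm_image:
  assumes "\<sigma> permutes {..<n}"
  shows "(\<Sum>i<n. F (\<sigma> i)) = (\<Sum>k<n. F k)"
  using sum.permute[OF assms, of F] by (simp add: o_def)

lemma avg1:
  assumes i: "i < n"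
  shows "(\<Sum>\<sigma>\<in>{\<sigma>. \<sigma> permutes {..<n}}. x (\<sigma> i) ^ a) = fact n * psum n a x"
proof -
  let ?P = "{\<sigma>. \<sigma> permutes {..<n}}"
  have E: "(\<Sum>\<sigma>\<in>?P. x (\<sigma> k) ^ a) = (\<Sum>\<sigma>\<in>?P. x (\<sigma> 0) ^ a)" if k: "k < n" for k
  proof -
    obtain \<tau> where \<tau>: "\<tau> permutes {..<n}" "\<tau> 0 = k" using exists_perm1[OF k] by blast
    show ?thesis using sum_permutations_compose_right[OF \<tau>(1), of "\<lambda>\<sigma>. x (\<sigma> 0) ^ a"] \<tau>(2) by simp
  qed
  have "(\<Sum>k<n. \<Sum>\<sigma>\<in>?P. x (\<sigma> k) ^ a) = (\<Sum>\<sigma>\<in>?P. \<Sum>k<n. x (\<sigma> k) ^ a)" by (rule sum.swap)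
  also have "\<dots> = (\<Sum>\<sigma>\<in>?P. \<Sum>k<n. x k ^ a)"
    by (rule sum.cong[OF refl]) (simp add: sum_perm_pow)
  also have "\<dots> = fact n * (\<Sum>k<n. x k ^ a)" by (simp add: card_perms)
  finally have tot: "(\<Sum>k<n. \<Sum>\<sigma>\<in>?P. x (\<sigma> k) ^ a) = fact n * (\<Sum>k<n. x k ^ a)" .
  have "(\<Sum>k<n. \<Sum>\<sigma>\<in>?P. x (\<sigma> k) ^ a) = (\<Sum>k<n. \<Sum>\<sigma>\<in>?P. x (\<sigma> 0) ^ a)"
    by (rule sum.cong[OF refl]) (rule E, simp)
  also have "\<dots> = real n * (\<Sum>\<sigma>\<in>?P. x (\<sigma> 0) ^ a)" by simp
  finally have "(\<Sum>k<n. \<Sum>\<sigma>\<in>?P. x (\<sigma> k) ^ a) = real n * (\<Sum>\<sigma>\<in>?P. x (\<sigma> 0) ^ a)" .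
  with tot have "real n * (\<Sum>\<sigma>\<in>?P. x (\<sigma> 0) ^ a) = fact n * (\<Sum>k<n. x k ^ a)" by simp
  moreover have "n > 0" using i by simp
  ultimately have "(\<Sum>\<sigma>\<in>?P. x (\<sigma> 0) ^ a) = fact n * psum n a x"
    by (simp add: psum_def field_simps)
  then show ?thesis using E[OF i] by simp
qed

lemma avg2:
  assumes n: "2 \<le> n" and i: "i < n" and j: "j < n"
  shows "(\<Sum>\<sigma>\<in>{\<sigma>. \<sigma> permutes {..<n}}. x (\<sigma> i) ^ a * x (\<sigma> j) ^ b) =
     (\<Sum>\<sigma>\<in>{\<sigma>. \<sigma> permutes {..<n}}. x (\<sigma> 0) ^ a * x (\<sigma> (Suc 0)) ^ b) +
     (if i = j then fact n * (real n / (real n - 1)) * (psum n (a + b) x - psum n a x * psum n b x) else 0)"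
proof -
  let ?P = "{\<sigma>. \<sigma> permutes {..<n}}"
  define C where "C = (\<Sum>\<sigma>\<in>?P. x (\<sigma> 0) ^ a * x (\<sigma> (Suc 0)) ^ b)"
  define D where "D = fact n * psum n (a + b) x"
  have off: "(\<Sum>\<sigma>\<in>?P. x (\<sigma> k) ^ a * x (\<sigma> l) ^ b) = C" if kl: "k < n" "l < n" "k \<noteq> l" for k l
  proof -
    obtain \<tau> where \<tau>: "\<tau> permutes {..<n}" "\<tau> 0 = k" "\<tau> (Suc 0) = l" using exists_perm2[OF kl] by blast
    show ?thesis unfolding C_def
      using sum_permutations_compose_right[OF \<tau>(1), of "\<lambda>\<sigma>. x (\<sigma> 0) ^ a * x (\<sigma> (Suc 0)) ^ b"] \<tau>(2,3) by simp
  qed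
  have diag: "(\<Sum>\<sigma>\<in>?P. x (\<sigma> k) ^ a * x (\<sigma> k) ^ b) = D" if "k < n" for k
    using avg1[OF that, of x "a + b"] by (simp add: D_def power_add)
  have W: "(\<Sum>\<sigma>\<in>?P. x (\<sigma> k) ^ a * x (\<sigma> l) ^ b) = C + (if k = l then D - C else 0)" if "k < n" "l < n" for k l
    using off[OF that] diag[OF that(1)] by auto
  have "(\<Sum>k<n. \<Sum>l<n. \<Sum>\<sigma>\<in>?P. x (\<sigma> k) ^ a * x (\<sigma> l) ^ b) = (\<Sum>k<n. \<Sum>l<n. C + (if k = l then D - C else 0))"
    by (intro sum.cong refl) (simp add: W)
  also have "\<dots> = real n * (real n * C + (D - C))"
    by (simp add: sum.distrib)
  finally have tot1: "(\<Sum>k<n. \<Sum>l<n. \<Sum>\<sigma>\<in>?P. x (\<sigma> k) ^ a * x (\<sigma> l) ^ b) = real n * (real n * C + (D - C))" .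
  have "(\<Sum>k<n. \<Sum>l<n. \<Sum>\<sigma>\<in>?P. x (\<sigma> k) ^ a * x (\<sigma> l) ^ b) = (\<Sum>\<sigma>\<in>?P. \<Sum>k<n. \<Sum>l<n. x (\<sigma> k) ^ a * x (\<sigma> l) ^ b)"
  proof -
    have "(\<Sum>k<n. \<Sum>l<n. \<Sum>\<sigma>\<in>?P. x (\<sigma> k) ^ a * x (\<sigma> l) ^ b) = (\<Sum>k<n. \<Sum>\<sigma>\<in>?P. \<Sum>l<n. x (\<sigma> k) ^ a * x (\<sigma> l) ^ b)"
      by (rule sum.cong[OF refl], rule sum.swap)
    also have "\<dots> = (\<Sum>\<sigma>\<in>?P. \<Sum>k<n. \<Sum>l<n. x (\<sigma> k) ^ a * x (\<sigma> l) ^ b)"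
      by (rule sum.swap)
    finally show ?thesis .
  qed
  also have "\<dots> = (\<Sum>\<sigma>\<in>?P. (\<Sum>k<n. x (\<sigma> k) ^ a) * (\<Sum>l<n. x (\<sigma> l) ^ b))"
    by (simp add: sum_product)
  also have "\<dots> = (\<Sum>\<sigma>\<in>?P. (\<Sum>k<n. x k ^ a) * (\<Sum>l<n. x l ^ b))"
    by (rule sum.cong[OF refl]) (simp add: sum_perm_pow)
  also have "\<dots> = fact n * ((\<Sum>k<n. x k ^ a) * (\<Sum>l<n. x l ^ b))" by (simp add: card_perms)
  finally have tot2: "real n * (real n * C + (D - C)) = fact n * ((\<Sum>k<n. x k ^ a) * (\<Sum>l<n. x l ^ b))"
    using tot1 by simp
  have n0: "real n \<noteq> 0" "real n - 1 \<noteq> 0" using n by auto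
  have Sa: "(\<Sum>k<n. x k ^ a) = real n * psum n a x" and Sb: "(\<Sum>k<n. x k ^ b) = real n * psum n b x"
    using n0 by (simp_all add: psum_def)
  have "real n * (real n * C + (D - C)) = real n * (fact n * (real n * (psum n a x * psum n b x)))"
    using tot2 unfolding Sa Sb by (simp add: algebra_simps)
  then have "real n * C + (D - C) = fact n * (real n * (psum n a x * psum n b x))"
    using n0(1) by simp
  then have DC: "D - C = fact n * (real n / (real n - 1)) * (psum n (a + b) x - psum n a x * psum n b x)"
    using n0 unfolding D_def by (simp add: field_simps)
  show ?thesis
  proof (cases "i = j")
    case True
    then show ?thesis using diag[OF i] DC unfolding C_def[symmetric] by simp
  next
    case False
    then show ?thesis using off[OF i j False] unfolding C_def[symmetric] by simp
  qed
qed

lemma sum_swap4: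
  "(\<Sum>s\<in>S. \<Sum>a\<in>A. \<Sum>b\<in>B. \<Sum>i\<in>I. \<Sum>j\<in>J. F s a b i j) = (\<Sum>a\<in>A. \<Sum>b\<in>B. \<Sum>i\<in>I. \<Sum>j\<in>J. \<Sum>s\<in>S. F s a b i j)"
proof -
  have "(\<Sum>s\<in>S. \<Sum>a\<in>A. \<Sum>b\<in>B. \<Sum>i\<in>I. \<Sum>j\<in>J. F s a b i j) = (\<Sum>a\<in>A. \<Sum>s\<in>S. \<Sum>b\<in>B. \<Sum>i\<in>I. \<Sum>j\<in>J. F s a b i j)"
    by (rule sum.swap)
  also have "\<dots> = (\<Sum>a\<in>A. \<Sum>b\<in>B. \<Sum>s\<in>S. \<Sum>i\<in>I. \<Sum>j\<in>J. F s a b i j)"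
    by (rule sum.cong[OF refl], rule sum.swap)
  also have "\<dots> = (\<Sum>a\<in>A. \<Sum>b\<in>B. \<Sum>i\<in>I. \<Sum>s\<in>S. \<Sum>j\<in>J. F s a b i j)"
    by (rule sum.cong[OF refl], rule sum.cong[OF refl], rule sum.swap)
  also have "\<dots> = (\<Sum>a\<in>A. \<Sum>b\<in>B. \<Sum>i\<in>I. \<Sum>j\<in>J. \<Sum>s\<in>S. F s a b i j)"
    by (rule sum.cong[OF refl], rule sum.cong[OF refl], rule sum.cong[OF refl], rule sum.swap)
  finally show ?thesis .
qed

lemma sum_swap3:
  "(\<Sum>s\<in>S. \<Sum>a\<in>A. \<Sum>i\<in>I. F s a i) = (\<Sum>a\<in>A. \<Sum>i\<in>I. \<Sum>s\<in>S. F s a i)"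
proof -
  have "(\<Sum>s\<in>S. \<Sum>a\<in>A. \<Sum>i\<in>I. F s a i) = (\<Sum>a\<in>A. \<Sum>s\<in>S. \<Sum>i\<in>I. F s a i)"
    by (rule sum.swap)
  also have "\<dots> = (\<Sum>a\<in>A. \<Sum>i\<in>I. \<Sum>s\<in>S. F s a i)"
    by (rule sum.cong[OF refl], rule sum.swap)
  finally show ?thesis .
qed

lemma sum_mult_delta:
  assumes "finite I" "i0 \<in> I"
  shows "(\<Sum>j\<in>I. f j * (if j = i0 then t else 0)) = f i0 * (t::real)"
proof -
  have "(\<Sum>j\<in>I. f j * (if j = i0 then t else 0)) = (\<Sum>j\<in>I. if j = i0 then f j * t else 0)"
    by (intro sum.cong refl) simp
  also have "\<dots> = f i0 * t" using assms by (simp add: sum.delta)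
  finally show ?thesis .
qed

lemma cancel_lemma:
  assumes "finite I" "(\<Sum>i\<in>I. u i) = (0::real)"
  shows "(\<Sum>i\<in>I. \<Sum>j\<in>I. u i * v j * (C + (if i = j then D else 0))) = D * (\<Sum>i\<in>I. u i * v i)"
proof -
  have e: "\<And>i j. u i * v j * (C + (if i = j then D else 0)) = C * u i * v j + u i * v j * (if j = i then D else 0)"
    by (auto simp: algebra_simps)
  have "(\<Sum>i\<in>I. \<Sum>j\<in>I. u i * v j * (C + (if i = j then D else 0))) =
        (\<Sum>i\<in>I. \<Sum>j\<in>I. C * u i * v j + u i * v j * (if j = i then D else 0))"
    by (simp only: e)
  also have "\<dots> = (\<Sum>i\<in>I. C * u i * (\<Sum>j\<in>I. v j) + (\<Sum>j\<in>I. u i * v j * (if j = i then D else 0)))"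
    by (simp only: sum.distrib sum_distrib_left)
  also have "\<dots> = (\<Sum>i\<in>I. C * u i * (\<Sum>j\<in>I. v j) + u i * v i * D)"
    by (intro sum.cong refl) (simp add: sum_mult_delta[OF assms(1)])
  also have "\<dots> = C * (\<Sum>i\<in>I. u i) * (\<Sum>j\<in>I. v j) + D * (\<Sum>i\<in>I. u i * v i)"
    by (simp add: sum.distrib sum_distrib_left sum_distrib_right mult_ac)
  also have "\<dots> = D * (\<Sum>i\<in>I. u i * v i)" using assms(2) by simp
  finally show ?thesis .
qed

lemma avg_hrep:
  assumes g0: "\<And>a \<mu>. (\<Sum>i<n. g a i \<mu>) = 0" and nd: "d = 0 \<or> 2 \<le> n"
  shows "(\<Sum>\<sigma>\<in>{\<sigma>. \<sigma> permutes {..<n}}. (hrep n d c g (\<lambda>k. x (\<sigma> k)))^2) =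
    fact n * ((\<Sum>l\<in>int_partitions d. c l * pmu n l x)^2 +
      (real n / (real n - 1)) * (\<Sum>i<n. \<Sum>a\<in>{1..d}. \<Sum>b\<in>{1..d}.
          (\<Sum>\<mu>\<in>int_partitions (d - a). g a i \<mu> * pmu n \<mu> x) *
          (\<Sum>\<mu>\<in>int_partitions (d - b). g b i \<mu> * pmu n \<mu> x) *
          (psum n (a + b) x - psum n a x * psum n b x)))"
proof -
  let ?P = "{\<sigma>. \<sigma> permutes {..<n}}"
  define s where "s = (\<Sum>l\<in>int_partitions d. c l * pmu n l x)"
  define G where "G = (\<lambda>a i. \<Sum>\<mu>\<in>int_partitions (d - a). g a i \<mu> * pmu n \<mu> x)"
  define Z where "Z = (\<lambda>a b. psum n (a + b) x - psum n a x * psum n b x)"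
  define u where "u = (\<lambda>\<sigma>. \<Sum>a\<in>{1..d}. \<Sum>i<n. x (\<sigma> i) ^ a * G a i)"
  have hx: "hrep n d c g (\<lambda>k. x (\<sigma> k)) = s + u \<sigma>" if "\<sigma> \<in> ?P" for \<sigma>
    using that by (simp add: hrep_def pmu_perm s_def u_def G_def)
  show ?thesis
  proof (cases "d = 0")
    case True
    then have "u \<sigma> = 0" for \<sigma> by (simp add: u_def)
    then show ?thesis using hx True by (simp add: card_perms s_def)
  next
    case False
    then have n: "2 \<le> n" using nd by simp
    have Gs: "(\<Sum>i<n. G a i) = 0" for a
    proof -
      have "(\<Sum>i<n. G a i) = (\<Sum>\<mu>\<in>int_partitions (d - a). (\<Sum>i<n. g a i \<mu>) * pmu n \<mu> x)"
        unfolding G_def by (subst sum.swap) (simp add: sum_distrib_right)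
      then show ?thesis using g0 by simp
    qed
    have cross: "(\<Sum>\<sigma>\<in>?P. u \<sigma>) = 0"
    proof -
      have "(\<Sum>\<sigma>\<in>?P. u \<sigma>) = (\<Sum>a\<in>{1..d}. \<Sum>i<n. \<Sum>\<sigma>\<in>?P. x (\<sigma> i) ^ a * G a i)"
        unfolding u_def by (rule sum_swap3)
      also have "\<dots> = (\<Sum>a\<in>{1..d}. \<Sum>i<n. fact n * psum n a x * G a i)"
        by (intro sum.cong refl) (simp add: avg1 flip: sum_distrib_right)
      also have "\<dots> = (\<Sum>a\<in>{1..d}. fact n * psum n a x * (\<Sum>i<n. G a i))"
        by (simp add: sum_distrib_left)
      also have "\<dots> = 0" by (simp add: Gs)
      finally show ?thesis .
    qed
    define K where "K = real n / (real n - 1)"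
    define C where "C = (\<lambda>a b. \<Sum>\<sigma>\<in>?P. x (\<sigma> 0) ^ a * x (\<sigma> (Suc 0)) ^ b)"
    have sq: "(\<Sum>\<sigma>\<in>?P. (u \<sigma>)^2) = fact n * K * (\<Sum>a\<in>{1..d}. \<Sum>b\<in>{1..d}. Z a b * (\<Sum>i<n. G a i * G b i))"
    proof -
      have "(\<Sum>\<sigma>\<in>?P. (u \<sigma>)^2) = (\<Sum>\<sigma>\<in>?P. \<Sum>a\<in>{1..d}. \<Sum>b\<in>{1..d}. \<Sum>i<n. \<Sum>j<n.
              (x (\<sigma> i) ^ a * G a i) * (x (\<sigma> j) ^ b * G b j))"
        unfolding u_def by (simp add: power2_eq_square sum_product)
      also have "\<dots> = (\<Sum>a\<in>{1..d}. \<Sum>b\<in>{1..d}. \<Sum>i<n. \<Sum>j<n. \<Sum>\<sigma>\<in>?P.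
              (x (\<sigma> i) ^ a * G a i) * (x (\<sigma> j) ^ b * G b j))"
        by (rule sum_swap4)
      also have "\<dots> = (\<Sum>a\<in>{1..d}. \<Sum>b\<in>{1..d}. \<Sum>i<n. \<Sum>j<n.
              G a i * G b j * (C a b + (if i = j then fact n * K * Z a b else 0)))"
      proof (intro sum.cong refl)
        fix a b i j assume "i \<in> {..<n}" "j \<in> {..<n}"
        then have ij: "i < n" "j < n" by auto
        have "(\<Sum>\<sigma>\<in>?P. (x (\<sigma> i) ^ a * G a i) * (x (\<sigma> j) ^ b * G b j)) =
              G a i * G b j * (\<Sum>\<sigma>\<in>?P. x (\<sigma> i) ^ a * x (\<sigma> j) ^ b)"
          by (simp add: sum_distrib_left mult_ac)
        also have "\<dots> = G a i * G b j * (C a b + (if i = j then fact n * K * Z a b else 0))"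
          using avg2[OF n ij, of x a b] by (simp add: C_def K_def Z_def)
        finally show "(\<Sum>\<sigma>\<in>?P. (x (\<sigma> i) ^ a * G a i) * (x (\<sigma> j) ^ b * G b j)) =
              G a i * G b j * (C a b + (if i = j then fact n * K * Z a b else 0))" .
      qed
      also have "\<dots> = (\<Sum>a\<in>{1..d}. \<Sum>b\<in>{1..d}. fact n * K * Z a b * (\<Sum>i<n. G a i * G b i))"
        by (intro sum.cong refl cancel_lemma) (simp_all add: Gs)
      also have "\<dots> = fact n * K * (\<Sum>a\<in>{1..d}. \<Sum>b\<in>{1..d}. Z a b * (\<Sum>i<n. G a i * G b i))"
        by (simp add: sum_distrib_left mult_ac)
      finally show ?thesis .
    qed
    have "(\<Sum>\<sigma>\<in>?P. (hrep n d c g (\<lambda>k. x (\<sigma> k)))^2) = (\<Sum>\<sigma>\<in>?P. s^2 + 2 * s * u \<sigma> + (u \<sigma>)^2)"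
      by (intro sum.cong refl) (simp add: hx power2_eq_square algebra_simps)
    also have "\<dots> = fact n * s^2 + 2 * s * (\<Sum>\<sigma>\<in>?P. u \<sigma>) + (\<Sum>\<sigma>\<in>?P. (u \<sigma>)^2)"
      by (simp add: sum.distrib sum_distrib_left card_perms)
    also have "\<dots> = fact n * s^2 + fact n * K * (\<Sum>a\<in>{1..d}. \<Sum>b\<in>{1..d}. Z a b * (\<Sum>i<n. G a i * G b i))"
      by (simp add: cross sq)
    also have "(\<Sum>a\<in>{1..d}. \<Sum>b\<in>{1..d}. Z a b * (\<Sum>i<n. G a i * G b i)) =
               (\<Sum>i<n. \<Sum>a\<in>{1..d}. \<Sum>b\<in>{1..d}. G a i * G b i * Z a b)"
    proof -
      have "(\<Sum>a\<in>{1..d}. \<Sum>b\<in>{1..d}. Z a b * (\<Sum>i<n. G a i * G b i)) =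
            (\<Sum>a\<in>{1..d}. \<Sum>b\<in>{1..d}. \<Sum>i<n. G a i * G b i * Z a b)"
        by (simp add: sum_distrib_left mult_ac)
      also have "\<dots> = (\<Sum>i<n. \<Sum>a\<in>{1..d}. \<Sum>b\<in>{1..d}. G a i * G b i * Z a b)"
        by (rule sum_swap3[symmetric])
      finally show ?thesis .
    qed
    finally show ?thesis by (simp add: s_def G_def Z_def K_def algebra_simps)
  qed
qed


lemma psd_outer: "psd_on I (\<lambda>p q. w p * w q)"
proof -
  have "(\<Sum>i\<in>I. \<Sum>j\<in>I. v i * (w i * w j) * v j) = (\<Sum>i\<in>I. v i * w i)^2" for v
    by (simp add: power2_eq_square sum_product mult_ac)
  then show ?thesis unfolding psd_on_def by (simp add: mult_ac)
qed

lemma psd_add: "psd_on I Q \<Longrightarrow> psd_on I Q' \<Longrightarrow> psd_on I (\<lambda>p q. Q p q + Q' p q)"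
  unfolding psd_on_def by (simp add: distrib_left distrib_right sum.distrib add_nonneg_nonneg)

lemma psd_smult: "psd_on I Q \<Longrightarrow> 0 \<le> r \<Longrightarrow> psd_on I (\<lambda>p q. r * Q p q)"
proof -
  assume Q: "psd_on I Q" and r: "0 \<le> r"
  have "(\<Sum>i\<in>I. \<Sum>j\<in>I. v i * (r * Q i j) * v j) = r * (\<Sum>i\<in>I. \<Sum>j\<in>I. v i * Q i j * v j)" for v
    by (simp add: sum_distrib_left mult_ac)
  then show ?thesis using Q r unfolding psd_on_def by simp
qed

lemma psd_zero: "psd_on I (\<lambda>p q. 0)"
  unfolding psd_on_def by simp

lemma psd_sum:
  assumes "finite J" "\<And>k. k \<in> J \<Longrightarrow> psd_on I (Q k)"
  shows "psd_on I (\<lambda>p q. \<Sum>k\<in>J. Q k p q)"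
  using assms
proof (induction J rule: finite_induct)
  case empty
  then show ?case using psd_zero by simp
next
  case (insert k J)
  then show ?case using psd_add[of I "Q k" "\<lambda>p q. \<Sum>k\<in>J. Q k p q"] by simp
qed

lemma trace_add: "trace_inner I (\<lambda>p q. X p q + Y p q) M = trace_inner I X M + trace_inner I Y M"
  unfolding trace_inner_def by (simp add: distrib_right sum.distrib)

lemma trace_zero: "trace_inner I (\<lambda>p q. 0) M = 0"
  unfolding trace_inner_def by simp

lemma trace_sum:
  "trace_inner I (\<lambda>p q. \<Sum>k\<in>J. X k p q) M = (\<Sum>k\<in>J. trace_inner I (X k) M)"
proof -
  have "trace_inner I (\<lambda>p q. \<Sum>k\<in>J. X k p q) M = (\<Sum>p\<in>I. \<Sum>q\<in>I. \<Sum>k\<in>J. X k p q * M q p)"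
    unfolding trace_inner_def by (simp add: sum_distrib_right)
  also have "\<dots> = (\<Sum>k\<in>J. \<Sum>p\<in>I. \<Sum>q\<in>I. X k p q * M q p)"
    using sum_swap3[where S=J and A=I and I=I and F="\<lambda>k p q. X k p q * M q p", symmetric] by simp
  finally show ?thesis unfolding trace_inner_def .
qed

lemma trace_cong:
  "(\<And>p q. p \<in> I \<Longrightarrow> q \<in> I \<Longrightarrow> X p q = Y p q) \<Longrightarrow> trace_inner I X M = trace_inner I Y M"
  unfolding trace_inner_def by (intro sum.cong refl) auto

lemma trace_A_outer:
  "trace_inner (int_partitions d) (\<lambda>l m. c l * c m) (\<lambda>i j. Amat n i j x) = (\<Sum>l\<in>int_partitions d. c l * pmu n l x)^2"
  unfolding trace_inner_def Amat_def by (simp add: power2_eq_square sum_product mult_ac)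

lemma Bidx_Sigma: "Bidx d = Sigma {1..d} (\<lambda>a. int_partitions (d - a))"
  by (auto simp: Bidx_def)

lemma sum_Bidx: "(\<Sum>p\<in>Bidx d. F p) = (\<Sum>a\<in>{1..d}. \<Sum>\<mu>\<in>int_partitions (d - a). F (a, \<mu>))"
  unfolding Bidx_Sigma by (subst sum.Sigma) (auto simp: finite_int_partitions)

lemma prod_sums: "(\<Sum>\<mu>\<in>A. f \<mu>) * (\<Sum>\<nu>\<in>B. g \<nu>) * (z::real) = (\<Sum>\<mu>\<in>A. \<Sum>\<nu>\<in>B. f \<mu> * g \<nu> * z)"
  unfolding sum_product by (simp add: sum_distrib_right)

lemma trace_B_outer:
  "trace_inner (Bidx d) (\<lambda>p q. w p * w q) (\<lambda>i j. Bmat n i j x) =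
   (\<Sum>a\<in>{1..d}. \<Sum>b\<in>{1..d}. (\<Sum>\<mu>\<in>int_partitions (d - a). w (a, \<mu>) * pmu n \<mu> x) *
       (\<Sum>\<nu>\<in>int_partitions (d - b). w (b, \<nu>) * pmu n \<nu> x) * (psum n (a + b) x - psum n a x * psum n b x))"
proof -
  have "trace_inner (Bidx d) (\<lambda>p q. w p * w q) (\<lambda>i j. Bmat n i j x) =
     (\<Sum>a\<in>{1..d}. \<Sum>\<mu>\<in>int_partitions (d - a). \<Sum>b\<in>{1..d}. \<Sum>\<nu>\<in>int_partitions (d - b).
        w (a, \<mu>) * w (b, \<nu>) * (pmu n \<nu> x * pmu n \<mu> x * (psum n (b + a) x - psum n b x * psum n a x)))"
    unfolding trace_inner_def sum_Bidx by (simp add: Bmat_def)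
  also have "\<dots> = (\<Sum>a\<in>{1..d}. \<Sum>b\<in>{1..d}. \<Sum>\<mu>\<in>int_partitions (d - a). \<Sum>\<nu>\<in>int_partitions (d - b).
        w (a, \<mu>) * w (b, \<nu>) * (pmu n \<nu> x * pmu n \<mu> x * (psum n (b + a) x - psum n b x * psum n a x)))"
    by (rule sum.cong[OF refl], rule sum.swap)
  also have "\<dots> = (\<Sum>a\<in>{1..d}. \<Sum>b\<in>{1..d}. (\<Sum>\<mu>\<in>int_partitions (d - a). w (a, \<mu>) * pmu n \<mu> x) *
       (\<Sum>\<nu>\<in>int_partitions (d - b). w (b, \<nu>) * pmu n \<nu> x) * (psum n (a + b) x - psum n a x * psum n b x))"
    unfolding prod_sums by (intro sum.cong refl) (simp add: mult_ac add.commute)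
  finally show ?thesis .
qed

section \<open>Decomposition of PSD matrices\<close>

lemma sum_mult_delta2:
  assumes "finite I" "i0 \<in> I"
  shows "(\<Sum>j\<in>I. (if j = i0 then t else 0) * f j) = t * (f i0 :: real)"
proof -
  have "(\<Sum>j\<in>I. (if j = i0 then t else 0) * f j) = (\<Sum>j\<in>I. if j = i0 then t * f j else 0)"
    by (intro sum.cong refl) simp
  also have "\<dots> = t * f i0" using assms by (simp add: sum.delta)
  finally show ?thesis .
qed

lemma qf_shift:
  fixes Q :: "'i \<Rightarrow> 'i \<Rightarrow> real"
  assumes fin: "finite I" and i0: "i0 \<in> I" and sym: "\<And>i j. i \<in> I \<Longrightarrow> j \<in> I \<Longrightarrow> Q i j = Q j i"
  shows "(\<Sum>i\<in>I. \<Sum>j\<in>I. (v i + (if i = i0 then t else 0)) * Q i j * (v j + (if j = i0 then t else 0))) =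
         (\<Sum>i\<in>I. \<Sum>j\<in>I. v i * Q i j * v j) + 2 * t * (\<Sum>j\<in>I. Q i0 j * v j) + t^2 * Q i0 i0"
proof -
  let ?e = "\<lambda>i. if i = i0 then t else (0::real)"
  have "(\<Sum>i\<in>I. \<Sum>j\<in>I. (v i + ?e i) * Q i j * (v j + ?e j)) =
        (\<Sum>i\<in>I. \<Sum>j\<in>I. v i * Q i j * v j) + (\<Sum>i\<in>I. \<Sum>j\<in>I. (v i * Q i j) * ?e j) +
        (\<Sum>i\<in>I. \<Sum>j\<in>I. ?e i * (Q i j * v j)) + (\<Sum>i\<in>I. \<Sum>j\<in>I. ?e i * (Q i j * ?e j))"
    by (simp add: distrib_left distrib_right sum.distrib mult_ac)
  also have "(\<Sum>i\<in>I. \<Sum>j\<in>I. (v i * Q i j) * ?e j) = (\<Sum>i\<in>I. v i * Q i i0 * t)"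
    by (rule sum.cong[OF refl]) (rule sum_mult_delta[OF fin i0])
  also have "\<dots> = t * (\<Sum>j\<in>I. Q i0 j * v j)"
    by (simp add: sum_distrib_left mult_ac sym[OF _ i0] cong: sum.cong)
  also have "(\<Sum>i\<in>I. \<Sum>j\<in>I. ?e i * (Q i j * v j)) = (\<Sum>i\<in>I. ?e i * (\<Sum>j\<in>I. Q i j * v j))"
    by (simp only: sum_distrib_left)
  also have "\<dots> = t * (\<Sum>j\<in>I. Q i0 j * v j)"
    by (rule sum_mult_delta2[OF fin i0])
  also have "(\<Sum>i\<in>I. \<Sum>j\<in>I. ?e i * (Q i j * ?e j)) = (\<Sum>i\<in>I. ?e i * (\<Sum>j\<in>I. Q i j * ?e j))"
    by (simp only: sum_distrib_left)
  also have "\<dots> = (\<Sum>i\<in>I. ?e i * (Q i i0 * t))"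
    by (rule sum.cong[OF refl]) (simp only: sum_mult_delta[OF fin i0])
  also have "\<dots> = t * (Q i0 i0 * t)"
    by (rule sum_mult_delta2[OF fin i0])
  finally show ?thesis by (simp add: power2_eq_square algebra_simps)
qed

lemma psd_decomp:
  fixes Q :: "'i \<Rightarrow> 'i \<Rightarrow> real"
  assumes "finite I" "psd_on I Q"
  shows "\<exists>(m::nat) w. \<forall>i\<in>I. \<forall>j\<in>I. Q i j = (\<Sum>k<m. w k i * w k j)"
  using assms
proof (induction I arbitrary: Q rule: finite_induct)
  case empty
  then show ?case by simp
next
  case (insert i0 F)
  let ?I = "insert i0 F"
  have fin: "finite ?I" using insert by simp
  have i0I: "i0 \<in> ?I" by simp
  have sym: "\<And>i j. i \<in> ?I \<Longrightarrow> j \<in> ?I \<Longrightarrow> Q i j = Q j i" using insert.prems by (auto simp: psd_on_def)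
  have pos: "\<And>v. 0 \<le> (\<Sum>i\<in>?I. \<Sum>j\<in>?I. v i * Q i j * v j)" using insert.prems by (auto simp: psd_on_def)
  have shift: "0 \<le> (\<Sum>i\<in>?I. \<Sum>j\<in>?I. v i * Q i j * v j) + 2 * t * (\<Sum>j\<in>?I. Q i0 j * v j) + t^2 * Q i0 i0" for v t
    using pos[of "\<lambda>i. v i + (if i = i0 then t else 0)"] qf_shift[OF fin i0I sym, where v=v and t=t] by simp
  have q0: "0 \<le> Q i0 i0" using shift[where v="\<lambda>_. 0" and t=1] by simp
  have restr: "(\<Sum>i\<in>?I. \<Sum>j\<in>?I. v i * R i j * v j) = (\<Sum>i\<in>F. \<Sum>j\<in>F. v i * R i j * v j)"
    if "v i0 = 0" for v and R :: "'i \<Rightarrow> 'i \<Rightarrow> real"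
    using insert(1,2) that by (simp add: sum_distrib_left)
  show ?case
  proof (cases "Q i0 i0 = 0")
    case True
    have row0: "Q i0 j = 0" if j: "j \<in> F" for j
    proof (rule ccontr)
      assume ne: "Q i0 j \<noteq> 0"
      let ?v = "\<lambda>i. if i = j then (1::real) else 0"
      have jI: "j \<in> ?I" using j by simp
      have A: "(\<Sum>i\<in>?I. \<Sum>j'\<in>?I. ?v i * Q i j' * ?v j') = Q j j"
        using qf_shift[OF fin jI sym, where v="\<lambda>_. 0" and t=1] by simp
      have B: "(\<Sum>j'\<in>?I. Q i0 j' * ?v j') = Q i0 j"
        using sum_mult_delta[OF fin jI, of "Q i0" 1] by simp
      have "0 \<le> Q j j + 2 * (- (Q j j + 1) / (2 * Q i0 j)) * Q i0 j"
        using shift[where v="?v" and t="- (Q j j + 1) / (2 * Q i0 j)"] A B True by simp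
      also have "\<dots> = -1" using ne by (simp add: field_simps)
      finally show False by simp
    qed
    have psdF: "psd_on F Q"
      unfolding psd_on_def
    proof (intro conjI ballI allI)
      fix i j assume "i \<in> F" "j \<in> F"
      then show "Q i j = Q j i" using sym by auto
    next
      fix v :: "'i \<Rightarrow> real"
      let ?v = "\<lambda>i. if i = i0 then 0 else v i"
      have "(\<Sum>i\<in>F. \<Sum>j\<in>F. v i * Q i j * v j) = (\<Sum>i\<in>F. \<Sum>j\<in>F. ?v i * Q i j * ?v j)"
        using insert(2) by (intro sum.cong refl) auto
      also have "\<dots> = (\<Sum>i\<in>?I. \<Sum>j\<in>?I. ?v i * Q i j * ?v j)" by (rule restr[symmetric]) simp
      finally show "0 \<le> (\<Sum>i\<in>F. \<Sum>j\<in>F. v i * Q i j * v j)" using pos[of ?v] by simp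
    qed
    obtain m :: nat and w where w: "\<forall>i\<in>F. \<forall>j\<in>F. Q i j = (\<Sum>k<m. w k i * w k j)" using insert.IH[OF psdF] by blast
    define w' where "w' = (\<lambda>k i. if i = i0 then 0 else w k i)"
    have "\<forall>i\<in>?I. \<forall>j\<in>?I. Q i j = (\<Sum>k<m. w' k i * w' k j)"
    proof (intro ballI)
      fix i j assume i: "i \<in> ?I" and j: "j \<in> ?I"
      show "Q i j = (\<Sum>k<m. w' k i * w' k j)"
      proof (cases "i = i0 \<or> j = i0")
        case True
        have Qz: "Q i j = 0"
        proof (cases "i = i0")
          case True
          show ?thesis
          proof (cases "j = i0")
            case True
            then show ?thesis using \<open>i = i0\<close> \<open>Q i0 i0 = 0\<close> by simp
          next
            case False
            then have "j \<in> F" using j by simp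
            then show ?thesis using \<open>i = i0\<close> row0 by simp
          qed
        next
          case False
          then have ji: "j = i0" using \<open>i = i0 \<or> j = i0\<close> by simp
          have "i \<in> F" using i False by simp
          then have "Q i0 i = 0" by (rule row0)
          then show ?thesis using sym[OF i j] ji by simp
        qed
        have "(\<Sum>k<m. w' k i * w' k j) = 0" using True by (auto simp: w'_def)
        then show ?thesis using Qz by simp
      next
        case False
        then show ?thesis using w i j by (simp add: w'_def)
      qed
    qed
    then show ?thesis by blast
  next
    case False
    define q where "q = Q i0 i0"
    have qpos: "0 < q" using q0 False by (simp add: q_def)
    define Q' where "Q' = (\<lambda>i j. Q i j - Q i0 i * Q i0 j / q)"
    have psdF: "psd_on F Q'"
      unfolding psd_on_def
    proof (intro conjI ballI allI)
      fix i j assume "i \<in> F" "j \<in> F"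
      then show "Q' i j = Q' j i" using sym by (auto simp: Q'_def mult.commute)
    next
      fix v :: "'i \<Rightarrow> real"
      let ?v = "\<lambda>i. if i = i0 then 0 else v i"
      let ?r = "\<Sum>j\<in>?I. Q i0 j * ?v j"
      have "(\<Sum>i\<in>F. \<Sum>j\<in>F. v i * Q' i j * v j) = (\<Sum>i\<in>F. \<Sum>j\<in>F. ?v i * Q' i j * ?v j)"
        using insert(2) by (intro sum.cong refl) auto
      also have "\<dots> = (\<Sum>i\<in>?I. \<Sum>j\<in>?I. ?v i * Q' i j * ?v j)" by (rule restr[symmetric]) simp
      also have "\<dots> = (\<Sum>i\<in>?I. \<Sum>j\<in>?I. ?v i * Q i j * ?v j) - ?r^2 / q"
      proof -
        have "(\<Sum>i\<in>?I. \<Sum>j\<in>?I. ?v i * Q' i j * ?v j) =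
              (\<Sum>i\<in>?I. \<Sum>j\<in>?I. ?v i * Q i j * ?v j - (?v i * Q i0 i) * (Q i0 j * ?v j) / q)"
          unfolding Q'_def by (intro sum.cong refl) (simp add: algebra_simps)
        also have "\<dots> = (\<Sum>i\<in>?I. \<Sum>j\<in>?I. ?v i * Q i j * ?v j) - (\<Sum>i\<in>?I. \<Sum>j\<in>?I. (?v i * Q i0 i) * (Q i0 j * ?v j)) / q"
          by (simp add: sum_subtractf sum_divide_distrib)
        also have "(\<Sum>i\<in>?I. \<Sum>j\<in>?I. (?v i * Q i0 i) * (Q i0 j * ?v j)) = ?r^2"
          by (simp add: power2_eq_square sum_product mult_ac)
        finally show ?thesis .
      qed
      also have "\<dots> = (\<Sum>i\<in>?I. \<Sum>j\<in>?I. ?v i * Q i j * ?v j) + 2 * (- ?r / q) * ?r + (- ?r / q)^2 * q"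
        using qpos by (simp add: field_simps power2_eq_square)
      finally show "0 \<le> (\<Sum>i\<in>F. \<Sum>j\<in>F. v i * Q' i j * v j)"
        using shift[where v="?v" and t="- ?r / q"] by (simp add: q_def)
    qed
    obtain m :: nat and w where w: "\<forall>i\<in>F. \<forall>j\<in>F. Q' i j = (\<Sum>k<m. w k i * w k j)" using insert.IH[OF psdF] by blast
    define w' where "w' = (\<lambda>k i. if k < m then (if i = i0 then 0 else w k i) else Q i0 i / sqrt q)"
    have "\<forall>i\<in>?I. \<forall>j\<in>?I. Q i j = (\<Sum>k<Suc m. w' k i * w' k j)"
    proof (intro ballI)
      fix i j assume i: "i \<in> ?I" and j: "j \<in> ?I"
      have last: "w' m i * w' m j = Q i0 i * Q i0 j / q"
        using qpos by (simp add: w'_def real_sqrt_mult[symmetric] field_simps)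
      have "(\<Sum>k<Suc m. w' k i * w' k j) = (\<Sum>k<m. w' k i * w' k j) + Q i0 i * Q i0 j / q"
        using last by simp
      also have "(\<Sum>k<m. w' k i * w' k j) = (if i = i0 \<or> j = i0 then 0 else Q' i j)"
        using w i j by (auto simp: w'_def)
      finally have eq: "(\<Sum>k<Suc m. w' k i * w' k j) = (if i = i0 \<or> j = i0 then 0 else Q' i j) + Q i0 i * Q i0 j / q" .
      show "Q i j = (\<Sum>k<Suc m. w' k i * w' k j)"
      proof (cases "i = i0 \<or> j = i0")
        case True
        then show ?thesis unfolding eq using qpos sym i j by (auto simp: q_def)
      next
        case False
        then show ?thesis unfolding eq by (simp add: Q'_def)
      qed
    qed
    then show ?thesis by blast
  qed
qed

section \<open>Sums of squares and closure of T\<close>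

lemma sos_zero: "sos_of S (\<lambda>x. 0)"
  unfolding sos_of_def by (intro exI[of _ "[]"]) simp

lemma sos_add: "sos_of S f \<Longrightarrow> sos_of S g \<Longrightarrow> sos_of S (\<lambda>x. f x + g x)"
proof -
  assume "sos_of S f" "sos_of S g"
  then obtain hs1 hs2 where 1: "set hs1 \<subseteq> S" "f = (\<lambda>x. \<Sum>h\<leftarrow>hs1. (h x)^2)"
    and 2: "set hs2 \<subseteq> S" "g = (\<lambda>x. \<Sum>h\<leftarrow>hs2. (h x)^2)" unfolding sos_of_def by blast
  show ?thesis unfolding sos_of_def
    by (intro exI[of _ "hs1 @ hs2"]) (simp add: 1 2)
qed

lemma sos_sq: "h \<in> S \<Longrightarrow> sos_of S (\<lambda>x. (h x)^2)"
  unfolding sos_of_def by (intro exI[of _ "[h]"]) simp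

lemma sos_sum:
  assumes "finite J" "\<And>j. j \<in> J \<Longrightarrow> sos_of S (f j)"
  shows "sos_of S (\<lambda>x. \<Sum>j\<in>J. f j x)"
  using assms
proof (induction J rule: finite_induct)
  case empty
  then show ?case using sos_zero by simp
next
  case (insert j J)
  then show ?case using sos_add[of S "f j" "\<lambda>x. \<Sum>j\<in>J. f j x"] by simp
qed

lemma sos_cong: "sos_of S f \<Longrightarrow> (\<And>x. f x = g x) \<Longrightarrow> sos_of S g"
proof -
  assume "sos_of S f" "\<And>x. f x = g x"
  moreover have "f = g" by (rule ext) (rule \<open>\<And>x. f x = g x\<close>)
  ultimately show ?thesis by simp
qed

lemma Tmod_sum:
  assumes "finite J" "\<And>j. j \<in> J \<Longrightarrow> f j \<in> Tmod n d"
  shows "(\<lambda>x. \<Sum>j\<in>J. f j x) \<in> Tmod n d"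
  using assms
proof (induction J rule: finite_induct)
  case empty
  then show ?case using Tmod.zero by simp
next
  case (insert j J)
  then show ?case using Tmod.add[of "f j" n d "\<lambda>x. \<Sum>j\<in>J. f j x"] by simp
qed

lemma Tmod_diff_gen:
  assumes a: "a \<in> {1..d}" and g: "g \<in> sym_forms n (d - a)" and i: "i < n" and j: "j < n"
  shows "(\<lambda>x. (x i ^ a - x j ^ a) * g x) \<in> Tmod n d"
proof (cases "i = j")
  case True
  then show ?thesis using Tmod.zero by simp
next
  case False
  obtain \<tau> where \<tau>: "\<tau> permutes {..<n}" "\<tau> 0 = i" "\<tau> (Suc 0) = j" using exists_perm2[OF i j False] by blast
  have gen: "(\<lambda>x. (x 0 ^ a - x 1 ^ a) * g x) \<in> Tmod n d"
    by (rule Tmod.gen) (use a g in \<open>auto simp: T_gens_def\<close>)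
  have "perm_act \<tau> (\<lambda>x. (x 0 ^ a - x 1 ^ a) * g x) \<in> Tmod n d"
    by (rule Tmod.perm[OF gen \<tau>(1)])
  moreover have "perm_act \<tau> g = g" using g \<tau>(1) by (simp add: sym_forms_def)
  then have "g (\<lambda>k. x (\<tau> k)) = g x" for x unfolding perm_act_def by metis
  then have "perm_act \<tau> (\<lambda>x. (x 0 ^ a - x 1 ^ a) * g x) = (\<lambda>x. (x i ^ a - x j ^ a) * g x)"
    unfolding perm_act_def using \<tau>(2,3) by simp
  ultimately show ?thesis by simp
qed

lemma pair_identity:
  assumes n: "0 < n"
  shows "(\<Sum>i<n. \<Sum>j<n. (x i ^ a - x j ^ a) * (x i ^ b - x j ^ b)) =
     2 * (real n)^2 * (psum n (a + b) x - psum n a x * psum n b x)"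
proof -
  have e: "(x i ^ a - x j ^ a) * (x i ^ b - x j ^ b) = x i ^ (a + b) - x i ^ a * x j ^ b - x j ^ a * x i ^ b + x j ^ (a + b)" for i j
    by (simp add: algebra_simps power_add)
  have f1: "(\<Sum>i<n. \<Sum>j<n. x i ^ (a + b)) = real n * (\<Sum>i<n. x i ^ (a + b))" by (simp add: sum_distrib_left)
  have f2: "(\<Sum>i<n. \<Sum>j<n. x j ^ (a + b)) = real n * (\<Sum>i<n. x i ^ (a + b))" by simp
  have f3: "(\<Sum>i<n. \<Sum>j<n. x i ^ a * x j ^ b) = (\<Sum>i<n. x i ^ a) * (\<Sum>j<n. x j ^ b)" by (simp add: sum_product)
  have f4: "(\<Sum>i<n. \<Sum>j<n. x j ^ a * x i ^ b) = (\<Sum>i<n. x i ^ a) * (\<Sum>j<n. x j ^ b)"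
    by (subst sum.swap) (simp add: sum_product)
  have "(\<Sum>i<n. \<Sum>j<n. (x i ^ a - x j ^ a) * (x i ^ b - x j ^ b)) =
     (\<Sum>i<n. \<Sum>j<n. x i ^ (a + b)) - (\<Sum>i<n. \<Sum>j<n. x i ^ a * x j ^ b) - (\<Sum>i<n. \<Sum>j<n. x j ^ a * x i ^ b) + (\<Sum>i<n. \<Sum>j<n. x j ^ (a + b))"
    by (simp only: e sum.distrib sum_subtractf)
  also have "\<dots> = 2 * real n * (\<Sum>i<n. x i ^ (a + b)) - 2 * (\<Sum>i<n. x i ^ a) * (\<Sum>j<n. x j ^ b)"
    unfolding f1 f2 f3 f4 by simp
  also have "\<dots> = 2 * (real n)^2 * (psum n (a + b) x - psum n a x * psum n b x)"
    using n by (simp add: psum_def field_simps power2_eq_square)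
  finally show ?thesis .
qed

lemma B_part_sos:
  assumes n: "0 < n"
  shows "sos_of (Tmod n d) (\<lambda>x. \<Sum>a\<in>{1..d}. \<Sum>b\<in>{1..d}. (\<Sum>\<mu>\<in>int_partitions (d - a). w (a, \<mu>) * pmu n \<mu> x) *
       (\<Sum>\<nu>\<in>int_partitions (d - b). w (b, \<nu>) * pmu n \<nu> x) * (psum n (a + b) x - psum n a x * psum n b x))"
proof -
  define G where "G = (\<lambda>a x. \<Sum>\<mu>\<in>int_partitions (d - a). w (a, \<mu>) * pmu n \<mu> x)"
  define c0 where "c0 = 1 / (sqrt 2 * real n)"
  have c0sq: "c0^2 = 1 / (2 * (real n)^2)" using n by (simp add: c0_def power2_eq_square field_simps)
  define hij where "hij = (\<lambda>i j x. c0 * (\<Sum>a\<in>{1..d}. (x i ^ a - x j ^ a) * G a x))"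
  have memb: "hij i j \<in> Tmod n d" if "i < n" "j < n" for i j
  proof -
    have "(\<lambda>x. \<Sum>a\<in>{1..d}. \<Sum>\<mu>\<in>int_partitions (d - a). (c0 * w (a, \<mu>)) * ((x i ^ a - x j ^ a) * pmu n \<mu> x)) \<in> Tmod n d"
    proof (rule Tmod_sum, simp, rule Tmod_sum[OF finite_int_partitions])
      fix a \<mu> assume a: "a \<in> {1..d}" and \<mu>: "\<mu> \<in> int_partitions (d - a)"
      have "pmu n \<mu> \<in> sym_forms n (d - a)" by (rule PS_sym_forms[OF PS_pmu[OF \<mu>]])
      then have "(\<lambda>x. (x i ^ a - x j ^ a) * pmu n \<mu> x) \<in> Tmod n d"
        by (rule Tmod_diff_gen[OF a _ that])
      then show "(\<lambda>x. (c0 * w (a, \<mu>)) * ((x i ^ a - x j ^ a) * pmu n \<mu> x)) \<in> Tmod n d"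
        by (rule Tmod.smult)
    qed
    moreover have "(\<lambda>x. \<Sum>a\<in>{1..d}. \<Sum>\<mu>\<in>int_partitions (d - a). (c0 * w (a, \<mu>)) * ((x i ^ a - x j ^ a) * pmu n \<mu> x)) = hij i j"
      by (rule ext) (simp add: hij_def G_def sum_distrib_left mult_ac)
    ultimately show ?thesis by simp
  qed
  have "sos_of (Tmod n d) (\<lambda>x. \<Sum>i<n. \<Sum>j<n. (hij i j x)^2)"
    by (intro sos_sum sos_sq memb) auto
  moreover have "(\<Sum>i<n. \<Sum>j<n. (hij i j x)^2) =
      (\<Sum>a\<in>{1..d}. \<Sum>b\<in>{1..d}. G a x * G b x * (psum n (a + b) x - psum n a x * psum n b x))" for x
  proof -
    have "(\<Sum>i<n. \<Sum>j<n. (hij i j x)^2) =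
       (\<Sum>i<n. \<Sum>j<n. \<Sum>a\<in>{1..d}. \<Sum>b\<in>{1..d}. c0^2 * (G a x * G b x) * ((x i ^ a - x j ^ a) * (x i ^ b - x j ^ b)))"
      by (simp add: hij_def power_mult_distrib power2_eq_square sum_product sum_distrib_left mult_ac)
    also have "\<dots> = (\<Sum>a\<in>{1..d}. \<Sum>b\<in>{1..d}. c0^2 * (G a x * G b x) * (\<Sum>i<n. \<Sum>j<n. (x i ^ a - x j ^ a) * (x i ^ b - x j ^ b)))"
    proof -
      have "(\<Sum>i<n. \<Sum>j<n. \<Sum>a\<in>{1..d}. \<Sum>b\<in>{1..d}. c0^2 * (G a x * G b x) * ((x i ^ a - x j ^ a) * (x i ^ b - x j ^ b))) =
            (\<Sum>a\<in>{1..d}. \<Sum>b\<in>{1..d}. \<Sum>i<n. \<Sum>j<n. c0^2 * (G a x * G b x) * ((x i ^ a - x j ^ a) * (x i ^ b - x j ^ b)))"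
      proof -
        have "(\<Sum>i<n. \<Sum>j<n. \<Sum>a\<in>{1..d}. \<Sum>b\<in>{1..d}. c0^2 * (G a x * G b x) * ((x i ^ a - x j ^ a) * (x i ^ b - x j ^ b))) =
              (\<Sum>i<n. \<Sum>a\<in>{1..d}. \<Sum>b\<in>{1..d}. \<Sum>j<n. c0^2 * (G a x * G b x) * ((x i ^ a - x j ^ a) * (x i ^ b - x j ^ b)))"
          by (rule sum.cong[OF refl], rule sum_swap3)
        also have "\<dots> = (\<Sum>a\<in>{1..d}. \<Sum>b\<in>{1..d}. \<Sum>i<n. \<Sum>j<n. c0^2 * (G a x * G b x) * ((x i ^ a - x j ^ a) * (x i ^ b - x j ^ b)))"
          by (rule sum_swap3)
        finally show ?thesis .
      qed
      also have "\<dots> = (\<Sum>a\<in>{1..d}. \<Sum>b\<in>{1..d}. c0^2 * (G a x * G b x) * (\<Sum>i<n. \<Sum>j<n. (x i ^ a - x j ^ a) * (x i ^ b - x j ^ b)))"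
        by (simp add: sum_distrib_left)
      finally show ?thesis .
    qed
    also have "\<dots> = (\<Sum>a\<in>{1..d}. \<Sum>b\<in>{1..d}. G a x * G b x * (psum n (a + b) x - psum n a x * psum n b x))"
      using n by (simp add: pair_identity c0sq mult.assoc)
    finally show ?thesis .
  qed
  ultimately show ?thesis unfolding G_def by (rule sos_cong)
qed


lemma trace_smult: "trace_inner I (\<lambda>p q. r * X p q) M = r * trace_inner I X M"
  unfolding trace_inner_def by (simp add: sum_distrib_left mult_ac)

lemma avg_T:
  assumes "h \<in> Tmod n d" "2 * d \<le> n"
  shows "\<exists>Q1 Q2. psd_on (int_partitions d) Q1 \<and> psd_on (Bidx d) Q2 \<and>
    (\<forall>x. (\<Sum>\<sigma>\<in>{\<sigma>. \<sigma> permutes {..<n}}. (h (\<lambda>k. x (\<sigma> k)))^2) =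
       fact n * (trace_inner (int_partitions d) Q1 (\<lambda>i j. Amat n i j x) + trace_inner (Bidx d) Q2 (\<lambda>i j. Bmat n i j x)))"
proof -
  have nd: "d = 0 \<or> 2 \<le> n" using assms(2) by auto
  obtain c g where g0: "\<And>a \<mu>. (\<Sum>i<n. g a i \<mu>) = 0" and h: "h = hrep n d c g"
    using Tmod_TR[OF assms(1) nd] by (auto simp: TR_def)
  define K where "K = real n / (real n - 1)"
  have K0: "0 \<le> K" unfolding K_def by (cases n) auto
  define Q1 where "Q1 = (\<lambda>l m. c l * c m)"
  define Q2 where "Q2 = (\<lambda>p q. \<Sum>i<n. K * (g (fst p) i (snd p) * g (fst q) i (snd q)))"
  have p1: "psd_on (int_partitions d) Q1" unfolding Q1_def by (rule psd_outer)
  have p2: "psd_on (Bidx d) Q2" unfolding Q2_def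
    by (intro psd_sum psd_smult K0 psd_outer[of _ "\<lambda>p. g (fst p) i (snd p)" for i]) simp
  have eq: "(\<Sum>\<sigma>\<in>{\<sigma>. \<sigma> permutes {..<n}}. (h (\<lambda>k. x (\<sigma> k)))^2) =
       fact n * (trace_inner (int_partitions d) Q1 (\<lambda>i j. Amat n i j x) + trace_inner (Bidx d) Q2 (\<lambda>i j. Bmat n i j x))" for x
  proof -
    have tA: "trace_inner (int_partitions d) Q1 (\<lambda>i j. Amat n i j x) = (\<Sum>l\<in>int_partitions d. c l * pmu n l x)^2"
      unfolding Q1_def by (rule trace_A_outer)
    have tB: "trace_inner (Bidx d) Q2 (\<lambda>i j. Bmat n i j x) =
       K * (\<Sum>i<n. \<Sum>a\<in>{1..d}. \<Sum>b\<in>{1..d}.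
          (\<Sum>\<mu>\<in>int_partitions (d - a). g a i \<mu> * pmu n \<mu> x) *
          (\<Sum>\<mu>\<in>int_partitions (d - b). g b i \<mu> * pmu n \<mu> x) *
          (psum n (a + b) x - psum n a x * psum n b x))"
    proof -
      have "trace_inner (Bidx d) Q2 (\<lambda>i j. Bmat n i j x) =
          (\<Sum>i<n. K * trace_inner (Bidx d) (\<lambda>p q. g (fst p) i (snd p) * g (fst q) i (snd q)) (\<lambda>i j. Bmat n i j x))"
        unfolding Q2_def trace_sum trace_smult ..
      also have "\<dots> = (\<Sum>i<n. K * (\<Sum>a\<in>{1..d}. \<Sum>b\<in>{1..d}.
          (\<Sum>\<mu>\<in>int_partitions (d - a). g a i \<mu> * pmu n \<mu> x) *
          (\<Sum>\<mu>\<in>int_partitions (d - b). g b i \<mu> * pmu n \<mu> x) *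
          (psum n (a + b) x - psum n a x * psum n b x)))"
        using trace_B_outer[of d "\<lambda>p. g (fst p) i (snd p)" n x for i] by simp
      finally show ?thesis by (simp add: sum_distrib_left)
    qed
    have "(\<Sum>\<sigma>\<in>{\<sigma>. \<sigma> permutes {..<n}}. (h (\<lambda>k. x (\<sigma> k)))^2) =
          (\<Sum>\<sigma>\<in>{\<sigma>. \<sigma> permutes {..<n}}. (hrep n d c g (\<lambda>k. x (\<sigma> k)))^2)"
      unfolding h ..
    also have "\<dots> = fact n * ((\<Sum>l\<in>int_partitions d. c l * pmu n l x)^2 +
      K * (\<Sum>i<n. \<Sum>a\<in>{1..d}. \<Sum>b\<in>{1..d}.
          (\<Sum>\<mu>\<in>int_partitions (d - a). g a i \<mu> * pmu n \<mu> x) *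
          (\<Sum>\<mu>\<in>int_partitions (d - b). g b i \<mu> * pmu n \<mu> x) *
          (psum n (a + b) x - psum n a x * psum n b x)))"
      unfolding K_def by (rule avg_hrep[OF g0 nd])
    also have "\<dots> = fact n * (trace_inner (int_partitions d) Q1 (\<lambda>i j. Amat n i j x) + trace_inner (Bidx d) Q2 (\<lambda>i j. Bmat n i j x))"
      unfolding tA tB ..
    finally show ?thesis .
  qed
  show ?thesis using p1 p2 eq by blast
qed

theorem lemma5p1:
  fixes n d :: nat and f :: "(nat \<Rightarrow> real) \<Rightarrow> real"
  assumes "2 * d \<le> n"
    and "f \<in> sym_forms n (2 * d)"
  shows "sos_of (Tmod n d) f \<longleftrightarrow>
    (\<exists>Q1 Q2. psd_on (int_partitions d) Q1 \<and> psd_on (Bidx d) Q2 \<and>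
       f = (\<lambda>x. trace_inner (int_partitions d) Q1 (\<lambda>i j. Amat n i j x)
               + trace_inner (Bidx d) Q2 (\<lambda>i j. Bmat n i j x)))"
proof
  let ?P = "{\<sigma>. \<sigma> permutes {..<n}}"
  assume "sos_of (Tmod n d) f"
  then obtain hs where hs: "set hs \<subseteq> Tmod n d" and f: "f = (\<lambda>x. \<Sum>h\<leftarrow>hs. (h x)^2)"
    unfolding sos_of_def by blast
  have "\<exists>Q1 Q2. psd_on (int_partitions d) Q1 \<and> psd_on (Bidx d) Q2 \<and>
    (\<forall>x. (\<Sum>\<sigma>\<in>?P. \<Sum>h\<leftarrow>hs. (h (\<lambda>k. x (\<sigma> k)))^2) =
       fact n * (trace_inner (int_partitions d) Q1 (\<lambda>i j. Amat n i j x) + trace_inner (Bidx d) Q2 (\<lambda>i j. Bmat n i j x)))"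
    using hs
  proof (induction hs)
    case Nil
    show ?case
      by (rule exI[of _ "\<lambda>p q. 0"], rule exI[of _ "\<lambda>p q. 0"]) (simp add: psd_zero trace_zero)
  next
    case (Cons h0 hs)
    obtain Q1 Q2 where Q: "psd_on (int_partitions d) Q1" "psd_on (Bidx d) Q2"
      "\<And>x. (\<Sum>\<sigma>\<in>?P. \<Sum>h\<leftarrow>hs. (h (\<lambda>k. x (\<sigma> k)))^2) =
       fact n * (trace_inner (int_partitions d) Q1 (\<lambda>i j. Amat n i j x) + trace_inner (Bidx d) Q2 (\<lambda>i j. Bmat n i j x))"
      using Cons by auto
    obtain R1 R2 where R: "psd_on (int_partitions d) R1" "psd_on (Bidx d) R2"
      "\<And>x. (\<Sum>\<sigma>\<in>?P. (h0 (\<lambda>k. x (\<sigma> k)))^2) =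
       fact n * (trace_inner (int_partitions d) R1 (\<lambda>i j. Amat n i j x) + trace_inner (Bidx d) R2 (\<lambda>i j. Bmat n i j x))"
      using avg_T[of h0 n d] Cons.prems assms(1) by auto
    have "psd_on (int_partitions d) (\<lambda>p q. R1 p q + Q1 p q)" by (rule psd_add[OF R(1) Q(1)])
    moreover have "psd_on (Bidx d) (\<lambda>p q. R2 p q + Q2 p q)" by (rule psd_add[OF R(2) Q(2)])
    moreover have "(\<Sum>\<sigma>\<in>?P. \<Sum>h\<leftarrow>h0 # hs. (h (\<lambda>k. x (\<sigma> k)))^2) =
       fact n * (trace_inner (int_partitions d) (\<lambda>p q. R1 p q + Q1 p q) (\<lambda>i j. Amat n i j x) +
                 trace_inner (Bidx d) (\<lambda>p q. R2 p q + Q2 p q) (\<lambda>i j. Bmat n i j x))" for x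
      by (simp add: sum.distrib R(3) Q(3) trace_add algebra_simps)
    ultimately show ?case by blast
  qed
  then obtain Q1 Q2 where Q: "psd_on (int_partitions d) Q1" "psd_on (Bidx d) Q2"
      "\<And>x. (\<Sum>\<sigma>\<in>?P. \<Sum>h\<leftarrow>hs. (h (\<lambda>k. x (\<sigma> k)))^2) =
       fact n * (trace_inner (int_partitions d) Q1 (\<lambda>i j. Amat n i j x) + trace_inner (Bidx d) Q2 (\<lambda>i j. Bmat n i j x))"
    by blast
  have sym: "f (\<lambda>k. x (\<sigma> k)) = f x" if "\<sigma> \<in> ?P" for \<sigma> x
  proof -
    have "perm_act \<sigma> f = f" using assms(2) that by (simp add: sym_forms_def)
    then show ?thesis unfolding perm_act_def by metis
  qed
  have "f x = trace_inner (int_partitions d) Q1 (\<lambda>i j. Amat n i j x) + trace_inner (Bidx d) Q2 (\<lambda>i j. Bmat n i j x)" for x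
  proof -
    have "fact n * f x = (\<Sum>\<sigma>\<in>?P. f x)" by (simp add: card_perms)
    also have "\<dots> = (\<Sum>\<sigma>\<in>?P. f (\<lambda>k. x (\<sigma> k)))" by (rule sum.cong[OF refl]) (simp add: sym)
    also have "\<dots> = (\<Sum>\<sigma>\<in>?P. \<Sum>h\<leftarrow>hs. (h (\<lambda>k. x (\<sigma> k)))^2)" by (simp add: f)
    also have "\<dots> = fact n * (trace_inner (int_partitions d) Q1 (\<lambda>i j. Amat n i j x) + trace_inner (Bidx d) Q2 (\<lambda>i j. Bmat n i j x))"
      by (rule Q(3))
    finally show ?thesis by simp
  qed
  then show "\<exists>Q1 Q2. psd_on (int_partitions d) Q1 \<and> psd_on (Bidx d) Q2 \<and>
       f = (\<lambda>x. trace_inner (int_partitions d) Q1 (\<lambda>i j. Amat n i j x)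
               + trace_inner (Bidx d) Q2 (\<lambda>i j. Bmat n i j x))"
    using Q(1,2) by blast
next
  assume "\<exists>Q1 Q2. psd_on (int_partitions d) Q1 \<and> psd_on (Bidx d) Q2 \<and>
       f = (\<lambda>x. trace_inner (int_partitions d) Q1 (\<lambda>i j. Amat n i j x)
               + trace_inner (Bidx d) Q2 (\<lambda>i j. Bmat n i j x))"
  then obtain Q1 Q2 where Q1: "psd_on (int_partitions d) Q1" and Q2: "psd_on (Bidx d) Q2"
    and f: "f = (\<lambda>x. trace_inner (int_partitions d) Q1 (\<lambda>i j. Amat n i j x)
               + trace_inner (Bidx d) Q2 (\<lambda>i j. Bmat n i j x))" by blast
  have finB: "finite (Bidx d)" unfolding Bidx_Sigma by (auto simp: finite_int_partitions)
  obtain m1 :: nat and w1 where w1: "\<forall>i\<in>int_partitions d. \<forall>j\<in>int_partitions d. Q1 i j = (\<Sum>k<m1. w1 k i * w1 k j)"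
    using psd_decomp[OF finite_int_partitions Q1] by blast
  obtain m2 :: nat and w2 where w2: "\<forall>i\<in>Bidx d. \<forall>j\<in>Bidx d. Q2 i j = (\<Sum>k<m2. w2 k i * w2 k j)"
    using psd_decomp[OF finB Q2] by blast
  have sA: "sos_of (Tmod n d) (\<lambda>x. trace_inner (int_partitions d) Q1 (\<lambda>i j. Amat n i j x))"
  proof -
    have "sos_of (Tmod n d) (\<lambda>x. \<Sum>k<m1. (\<Sum>l\<in>int_partitions d. w1 k l * pmu n l x)^2)"
    proof (intro sos_sum sos_sq)
      fix k
      have "PS n d (\<lambda>x. \<Sum>l\<in>int_partitions d. w1 k l * pmu n l x)" by (rule PSI) (rule refl)
      then have "(\<lambda>x. \<Sum>l\<in>int_partitions d. w1 k l * pmu n l x) \<in> sym_forms n d" by (rule PS_sym_forms)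
      then show "(\<lambda>x. \<Sum>l\<in>int_partitions d. w1 k l * pmu n l x) \<in> Tmod n d"
        by (intro Tmod.gen) (simp add: T_gens_def)
    qed simp
    moreover have "(\<Sum>k<m1. (\<Sum>l\<in>int_partitions d. w1 k l * pmu n l x)^2) = trace_inner (int_partitions d) Q1 (\<lambda>i j. Amat n i j x)" for x
    proof -
      have "trace_inner (int_partitions d) Q1 (\<lambda>i j. Amat n i j x) =
          trace_inner (int_partitions d) (\<lambda>p q. \<Sum>k<m1. w1 k p * w1 k q) (\<lambda>i j. Amat n i j x)"
        by (rule trace_cong) (use w1 in auto)
      also have "\<dots> = (\<Sum>k<m1. (\<Sum>l\<in>int_partitions d. w1 k l * pmu n l x)^2)"
        by (simp add: trace_sum trace_A_outer)
      finally show ?thesis by simp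
    qed
    ultimately show ?thesis by (rule sos_cong)
  qed
  have sB: "sos_of (Tmod n d) (\<lambda>x. trace_inner (Bidx d) Q2 (\<lambda>i j. Bmat n i j x))"
  proof (cases "0 < n")
    case False
    then have "d = 0" using assms(1) by simp
    then have "Bidx d = {}" by (simp add: Bidx_def)
    then show ?thesis using sos_zero by (simp add: trace_inner_def)
  next
    case True
    have "sos_of (Tmod n d) (\<lambda>x. \<Sum>k<m2. \<Sum>a\<in>{1..d}. \<Sum>b\<in>{1..d}. (\<Sum>\<mu>\<in>int_partitions (d - a). w2 k (a, \<mu>) * pmu n \<mu> x) *
       (\<Sum>\<nu>\<in>int_partitions (d - b). w2 k (b, \<nu>) * pmu n \<nu> x) * (psum n (a + b) x - psum n a x * psum n b x))"
      by (intro sos_sum B_part_sos[OF True]) simp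
    moreover have "(\<Sum>k<m2. \<Sum>a\<in>{1..d}. \<Sum>b\<in>{1..d}. (\<Sum>\<mu>\<in>int_partitions (d - a). w2 k (a, \<mu>) * pmu n \<mu> x) *
       (\<Sum>\<nu>\<in>int_partitions (d - b). w2 k (b, \<nu>) * pmu n \<nu> x) * (psum n (a + b) x - psum n a x * psum n b x)) =
       trace_inner (Bidx d) Q2 (\<lambda>i j. Bmat n i j x)" for x
    proof -
      have "trace_inner (Bidx d) Q2 (\<lambda>i j. Bmat n i j x) =
          trace_inner (Bidx d) (\<lambda>p q. \<Sum>k<m2. w2 k p * w2 k q) (\<lambda>i j. Bmat n i j x)"
        by (rule trace_cong) (use w2 in auto)
      also have "\<dots> = (\<Sum>k<m2. \<Sum>a\<in>{1..d}. \<Sum>b\<in>{1..d}. (\<Sum>\<mu>\<in>int_partitions (d - a). w2 k (a, \<mu>) * pmu n \<mu> x) *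
       (\<Sum>\<nu>\<in>int_partitions (d - b). w2 k (b, \<nu>) * pmu n \<nu> x) * (psum n (a + b) x - psum n a x * psum n b x))"
        by (simp add: trace_sum trace_B_outer)
      finally show ?thesis by simp
    qed
    ultimately show ?thesis by (rule sos_cong)
  qed
  show "sos_of (Tmod n d) f" unfolding f by (rule sos_add[OF sA sB])
qed

end
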